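(* For $n\ge0$ let $E^*_{2n+1}(q)=\sum_{\sigma\in\mathfrak{A}_{2n+1}}q^{(31\text{-}2)\sigma+2(2\text{-}13)\sigma}$ and $E^*_{2n}(q)=\sum_{\sigma\in\mathfrak{A}_{2n}}q^{(31\text{-}2)\sigma+2(2\text{-}31)\sigma}$ (with $E^*_0(q)=1$). Then $$\sum_{n=0}^{\infty} E_{2n+1}^*(q) t^{2n+1} = \cfrac{t}{1-\cfrac{q[1]_q[2]_qt^2}{1-\cfrac{q^3[2]_q[3]_qt^2}{1-\cfrac{q^5[3]_q[4]_qt^2}{\ddots}}}}, \qquad \sum_{n=0}^{\infty} E_{2n}^*(q) t^{2n} = \cfrac{1}{1-\cfrac{q^0[1]_q^2t^2}{1-\cfrac{q^2[2]_q^2t^2}{1-\cfrac{q^4[3]_q^2t^2}{\ddots}}}},$$ where in the $k$-th level the coefficient is $q^{2k-1}[k]_q[k+1]_q$ (resp. $q^{2k-2}[k]_q^2$).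
   Context: $[n]_q=1+q+\cdots+q^{n-1}$. $\mathfrak{A}_m$ is the set of falling alternating permutations $\sigma=\sigma_1\cdots\sigma_m$ of $\{1,\dots,m\}$, i.e. $\sigma_1>\sigma_2<\sigma_3>\cdots$. For such $\sigma$: $(31\text{-}2)\sigma=\#\{(i,j): i+1<j,\ \sigma_i>\sigma_j>\sigma_{i+1}\}$; $(2\text{-}31)\sigma=\#\{(i,j): j<i-1,\ \sigma_{i-1}>\sigma_j>\sigma_i\}$; $(2\text{-}13)\sigma=\#\{(i,j): j<i-1,\ \sigma_{i-1}<\sigma_j<\sigma_i\}$. *)

theory Defs
  imports "HOL-Computational_Algebra.Formal_Power_Series"
begin

definition qint :: "nat \<Rightarrow> 'a::field \<Rightarrow> 'a" where
  "qint n q = (\<Sum>i<n. q ^ i)"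

text \<open>Falling alternating permutations of {1..m}, as lists s = [s_1,...,s_m]
  (0-based list positions): s_1 > s_2 < s_3 > ...\<close>
definition falling_alt :: "nat \<Rightarrow> nat list set" where
  "falling_alt m = {s. distinct s \<and> set s = {1..m} \<and>
     (\<forall>i. i + 1 < m \<longrightarrow> (if even i then s ! i > s ! (i + 1) else s ! i < s ! (i + 1)))}"

definition pat_31_2 :: "nat list \<Rightarrow> nat" where
  "pat_31_2 s = card {(i, j). i < length s \<and> j < length s \<and> i + 1 < j \<and>
      s ! i > s ! j \<and> s ! j > s ! (i + 1)}"

definition pat_2_31 :: "nat list \<Rightarrow> nat" where
  "pat_2_31 s = card {(i, j). 1 \<le> i \<and> i < length s \<and> j + 1 < i \<and>
      s ! (i - 1) > s ! j \<and> s ! j > s ! i}"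

definition pat_2_13 :: "nat list \<Rightarrow> nat" where
  "pat_2_13 s = card {(i, j). 1 \<le> i \<and> i < length s \<and> j + 1 < i \<and>
      s ! (i - 1) < s ! j \<and> s ! j < s ! i}"

definition Estar :: "nat \<Rightarrow> 'a::field \<Rightarrow> 'a" where
  "Estar m q = (if odd m
     then (\<Sum>s\<in>falling_alt m. q ^ (pat_31_2 s + 2 * pat_2_13 s))
     else (\<Sum>s\<in>falling_alt m. q ^ (pat_31_2 s + 2 * pat_2_31 s)))"

text \<open>The infinite continued fraction is the limit (in the fps metric) as h \<rightarrow> \<infinity>.\<close>
fun cfrac :: "(nat \<Rightarrow> 'a::field) \<Rightarrow> nat \<Rightarrow> nat \<Rightarrow> 'a fps" where
  "cfrac c k 0 = 1"
| "cfrac c k (Suc h) = inverse (1 - fps_const (c k) * fps_X ^ 2 * cfrac c (Suc k) h)"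

end

theory Submission
  imports Defs "HOL-Library.Extended_Nat"
begin


fun Tr :: "(nat \<Rightarrow> 'a::field) \<Rightarrow> (nat \<Rightarrow> 'a) \<Rightarrow> nat \<Rightarrow> nat \<Rightarrow> 'a" where
  "Tr u d 0 h = (if h = 0 then 1 else 0)"
| "Tr u d (Suc n) h = (if h = 0 then 0 else u (h - 1) * Tr u d n (h - 1)) + d (Suc h) * Tr u d n (Suc h)"

fun TrH :: "(nat \<Rightarrow> 'a::field) \<Rightarrow> (nat \<Rightarrow> 'a) \<Rightarrow> nat \<Rightarrow> nat \<Rightarrow> nat \<Rightarrow> 'a" where
  "TrH u d H 0 h = (if h = 0 then 1 else 0)"
| "TrH u d H (Suc n) h = (if h = 0 then 0 else u (h - 1) * TrH u d H n (h - 1))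
     + (if Suc h \<le> H then d (Suc h) * TrH u d H n (Suc h) else 0)"

lemma TrH_Tr: "h + n \<le> H \<Longrightarrow> TrH u d H n h = Tr u d n h"
  by (induction n arbitrary: h) auto

lemma Tr_parity: "odd (n + h) \<Longrightarrow> Tr u d n h = 0"
  by (induction n arbitrary: h) (auto simp: odd_pos)

lemma cfrac_nth0: "fps_nth (cfrac c k h) 0 = 1"
  by (induction h arbitrary: k) (auto simp: fps_inverse_def)

lemma cfrac_Suc_mult: "cfrac c k (Suc h) * (1 - fps_const (c k) * fps_X ^ 2 * cfrac c (Suc k) h) = 1"
  by (simp add: inverse_mult_eq_1)

fun Psi :: "(nat \<Rightarrow> 'a) \<Rightarrow> (nat \<Rightarrow> 'a::field) \<Rightarrow> nat \<Rightarrow> nat \<Rightarrow> 'a fps" where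
  "Psi c u H 0 = cfrac c 1 H"
| "Psi c u H (Suc h) = fps_const (u h) * (fps_X * (Psi c u H h * cfrac c (Suc (Suc h)) (H - Suc h)))"

lemma ring_aux1:
  fixes F :: "'b::comm_ring_1"
  assumes "F = 1 + a * b * x ^ 2 * G * F"
  shows "A * F = A + b * (x * (a * (x * (A * F * G))))"
proof -
  have "A * F = A * (1 + a * b * x ^ 2 * G * F)" using assms by simp
  also have "\<dots> = A + b * (x * (a * (x * (A * F * G))))" by (simp add: algebra_simps power2_eq_square)
  finally show ?thesis .
qed

lemma Psi_eq:
  assumes c: "\<And>k. k \<ge> 1 \<Longrightarrow> c k = u (k - 1) * d k" and hH: "h \<le> H"
  shows "Psi c u H h = (if h = 0 then 1 else fps_const (u (h - 1)) * (fps_X * Psi c u H (h - 1)))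
      + (if h < H then fps_const (d (Suc h)) * (fps_X * Psi c u H (Suc h)) else 0)"
proof -
  have key: "cfrac c (Suc h) (H - h) = 1 + fps_const (u h) * fps_const (d (Suc h)) * fps_X ^ 2 * cfrac c (Suc (Suc h)) (H - Suc h) * cfrac c (Suc h) (H - h)"
    if "h < H" for h
  proof -
    have e: "H - h = Suc (H - Suc h)" using that by simp
    have cc: "fps_const (c (Suc h)) = fps_const (u h) * fps_const (d (Suc h))"
      using c[of "Suc h"] by simp
    have "cfrac c (Suc h) (Suc (H - Suc h)) * (1 - fps_const (c (Suc h)) * fps_X ^ 2 * cfrac c (Suc (Suc h)) (H - Suc h)) = 1"
      by (rule cfrac_Suc_mult)
    then have "cfrac c (Suc h) (H - h) = 1 + fps_const (c (Suc h)) * fps_X ^ 2 * cfrac c (Suc (Suc h)) (H - Suc h) * cfrac c (Suc h) (H - h)"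
      unfolding e by (simp add: algebra_simps)
    then show ?thesis unfolding cc .
  qed
  show ?thesis
  proof (cases h)
    case 0
    show ?thesis
    proof (cases "H = 0")
      case True then show ?thesis using 0 by simp
    next
      case False
      then have "0 < H" by simp
      from ring_aux1[OF key[OF this], of 1] show ?thesis using 0 False
        by (simp add: algebra_simps)
    qed
  next
    case (Suc g)
    show ?thesis
    proof (cases "h < H")
      case True
      have P1: "Psi c u H h = fps_const (u g) * (fps_X * Psi c u H g) * cfrac c (Suc h) (H - h)"
        using Suc by (simp add: algebra_simps)
      have P2: "Psi c u H (Suc h) = fps_const (u h) * (fps_X * (Psi c u H h * cfrac c (Suc (Suc h)) (H - Suc h)))"
        by simp
      have "Psi c u H h = fps_const (u g) * (fps_X * Psi c u H g) + fps_const (d (Suc h)) * (fps_X * (fps_const (u h) * (fps_X * (Psi c u H h * cfrac c (Suc (Suc h)) (H - Suc h)))))"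
        unfolding P1 by (rule ring_aux1[OF key[OF True]])
      then show ?thesis using Suc True P2 by simp
    next
      case False
      then have "H = Suc g" using hH Suc by simp
      then show ?thesis using Suc by simp
    qed
  qed
qed

lemma Psi_nth:
  assumes c: "\<And>k. k \<ge> 1 \<Longrightarrow> c k = u (k - 1) * d k"
  shows "h \<le> H \<Longrightarrow> fps_nth (Psi c u H h) n = TrH u d H n h"
proof (induction n arbitrary: h)
  case 0
  then show ?case by (cases h) (auto simp: cfrac_nth0)
next
  case (Suc n)
  have e: "fps_nth (Psi c u H h) (Suc n) = (if h = 0 then 0 else u (h - 1) * fps_nth (Psi c u H (h - 1)) n)
      + (if h < H then d (Suc h) * fps_nth (Psi c u H (Suc h)) n else 0)"
    apply (subst Psi_eq[where c=c and u=u and d=d, OF c Suc.prems])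
    by (cases "h = 0"; cases "h < H") (simp_all del: Psi.simps add: fps_X_mult_nth)
  show ?case unfolding e using Suc by (auto simp del: Psi.simps)
qed

lemma cfrac_lim:
  assumes c: "\<And>k. k \<ge> 1 \<Longrightarrow> c k = u (k - 1) * d k"
  shows "(\<lambda>H. cfrac c 1 H) \<longlonglongrightarrow> Abs_fps (\<lambda>n. Tr u d n 0)"
proof (rule tendsto_fpsI)
  fix n
  show "eventually (\<lambda>H. fps_nth (cfrac c 1 H) n = fps_nth (Abs_fps (\<lambda>n. Tr u d n 0)) n) sequentially"
    unfolding eventually_sequentially
  proof (intro exI allI impI)
    fix H assume "n \<le> H"
    have "fps_nth (cfrac c 1 H) n = fps_nth (Psi c u H 0) n" by simp
    also have "\<dots> = TrH u d H n 0" by (rule Psi_nth[where c=c and u=u and d=d, OF c]) auto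
    also have "\<dots> = Tr u d n 0" using \<open>n \<le> H\<close> by (intro TrH_Tr) simp
    finally show "fps_nth (cfrac c 1 H) n = fps_nth (Abs_fps (\<lambda>n. Tr u d n 0)) n" by simp
  qed
qed


definition PG :: "(nat \<Rightarrow> nat \<Rightarrow> bool) \<Rightarrow> ('b \<Rightarrow> 'b \<Rightarrow> 'b \<Rightarrow> bool) \<Rightarrow> 'b list \<Rightarrow> nat" where
  "PG Q R z = card {(a, j). a + 1 < length z \<and> j < length z \<and> Q a j \<and> R (z ! a) (z ! (a + 1)) (z ! j)}"

definition Q1 :: "nat \<Rightarrow> nat \<Rightarrow> bool" where "Q1 a j = (a + 1 < j)"
definition Q2 :: "nat \<Rightarrow> nat \<Rightarrow> bool" where "Q2 a j = (j < a)"

definition R312 :: "'b::ord \<Rightarrow> 'b \<Rightarrow> 'b \<Rightarrow> bool" where "R312 a b c = (c < a \<and> b < c)"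
definition R213 :: "'b::ord \<Rightarrow> 'b \<Rightarrow> 'b \<Rightarrow> bool" where "R213 a b c = (a < c \<and> c < b)"

lemma PG_finite: "finite {(a, j). a + 1 < length z \<and> j < length z \<and> Q a j \<and> R (z ! a) (z ! (a + 1)) (z ! j)}"
  by (rule finite_subset[of _ "{..<length z} \<times> {..<length z}"]) auto

lemma PG_delete:
  fixes z z' :: "'b list"
  assumes len: "length z = Suc (length z')" and dl: "d < length z"
    and nth: "\<And>k. k < length z' \<Longrightarrow> z' ! k = z ! (if k < d then k else Suc k)"
    and HQ1: "\<And>a j. Q a j \<Longrightarrow> a \<noteq> d \<Longrightarrow> Suc a \<noteq> d \<Longrightarrow> j \<noteq> d \<Longrightarrow>
                 Q (if a < d then a else a - 1) (if j < d then j else j - 1)"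
    and HQ2: "\<And>a j. Q a j \<Longrightarrow> Q (if a < d then a else Suc a) (if j < d then j else Suc j)"
    and C1: "\<And>a j. a + 1 < length z \<Longrightarrow> j < length z \<Longrightarrow> Q a j \<Longrightarrow> R (z ! a) (z ! (a + 1)) (z ! j)
               \<Longrightarrow> a \<noteq> d \<and> Suc a \<noteq> d \<and> j \<noteq> d"
    and C2: "\<And>c. 0 < d \<Longrightarrow> d + 1 < length z \<Longrightarrow> \<not> R (z ! (d - 1)) (z ! (d + 1)) c"
  shows "PG Q R z' = PG Q R z"
proof -
  define g where "g k = (if k < d then k else Suc k)" for k
  define f where "f k = (if k < d then k else k - 1)" for k
  define S' where "S' = {(a, j). a + 1 < length z' \<and> j < length z' \<and> Q a j \<and> R (z' ! a) (z' ! (a + 1)) (z' ! j)}"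
  define S where "S = {(a, j). a + 1 < length z \<and> j < length z \<and> Q a j \<and> R (z ! a) (z ! (a + 1)) (z ! j)}"
  have inj: "inj_on (\<lambda>(a, j). (g a, g j)) S'"
    by (auto simp: inj_on_def g_def split: if_splits)
  have img: "S = (\<lambda>(a, j). (g a, g j)) ` S'"
  proof (intro equalityI subsetI)
    fix p assume p: "p \<in> S"
    then obtain a j where pe: "p = (a, j)" and a1: "a + 1 < length z" and jl: "j < length z"
      and q: "Q a j" and r: "R (z ! a) (z ! (a + 1)) (z ! j)" by (auto simp: S_def)
    from C1[OF a1 jl q r] have nd: "a \<noteq> d" "Suc a \<noteq> d" "j \<noteq> d" by auto
    have gf: "g (f k) = k" if "k \<noteq> d" for k using that by (auto simp: g_def f_def)
    have fs: "f (a + 1) = f a + 1" using nd by (auto simp: f_def)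
    have fl: "f a + 1 < length z'" "f j < length z'" using nd a1 jl len dl by (auto simp: f_def)
    have zz: "z' ! f a = z ! a" "z' ! (f a + 1) = z ! (a + 1)" "z' ! f j = z ! j"
      using nth[of "f a"] nth[of "f a + 1"] nth[of "f j"] fl gf[of a] gf[of "a+1"] gf[of j] nd fs
      by (auto simp: g_def)
    have "(f a, f j) \<in> S'" using fl zz q r HQ1[OF q nd] by (auto simp: S'_def f_def)
    moreover have "p = (g (f a), g (f j))" using pe gf nd by simp
    ultimately show "p \<in> (\<lambda>(a, j). (g a, g j)) ` S'" by force
  next
    fix p assume p: "p \<in> (\<lambda>(a, j). (g a, g j)) ` S'"
    then obtain a j where aj: "(a, j) \<in> S'" and pe: "p = (g a, g j)" by auto
    from aj have a1: "a + 1 < length z'" and jl: "j < length z'" and q: "Q a j"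
      and r: "R (z' ! a) (z' ! (a + 1)) (z' ! j)" by (auto simp: S'_def)
    have ga: "z' ! a = z ! g a" "z' ! (a + 1) = z ! g (a + 1)" "z' ! j = z ! g j"
      using nth a1 jl by (auto simp: g_def)
    have gs: "g (a + 1) = g a + 1"
    proof (rule ccontr)
      assume "g (a + 1) \<noteq> g a + 1"
      then have ad: "a + 1 = d" by (auto simp: g_def split: if_splits)
      then have "g a = d - 1" "g (a + 1) = d + 1" by (auto simp: g_def)
      with r ga C2[of "z ! g j"] a1 len ad show False by auto
    qed
    have "(g a, g j) \<in> S"
      using a1 jl len q r ga gs HQ2[OF q] by (auto simp: S_def g_def)
    then show "p \<in> S" using pe by simp
  qed
  have "PG Q R z = card S" by (simp add: PG_def S_def)
  also have "\<dots> = card S'" unfolding img by (rule card_image[OF inj])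
  also have "\<dots> = PG Q R z'" by (simp add: PG_def S'_def)
  finally show ?thesis by simp
qed

lemma PG_replace:
  fixes z z' :: "'b list"
  assumes len: "length z' = length z" and p: "p < length z"
    and eq: "\<And>k. k < length z \<Longrightarrow> k \<noteq> p \<Longrightarrow> z' ! k = z ! k"
    and E1: "\<And>a j. a + 1 < length z \<Longrightarrow> j < length z \<Longrightarrow> Q a j \<Longrightarrow> j \<noteq> p \<Longrightarrow>
               R (z ! a) (z ! (a + 1)) (z ! j) = R (z' ! a) (z' ! (a + 1)) (z' ! j)"
    and E2: "\<And>a. a + 1 < length z \<Longrightarrow> Q a p \<Longrightarrow> \<not> R (z' ! a) (z' ! (a + 1)) (z' ! p)"
  shows "PG Q R z = PG Q R z' + card {a. a + 1 < length z \<and> Q a p \<and> R (z ! a) (z ! (a + 1)) (z ! p)}"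
proof -
  define S' where "S' = {(a, j). a + 1 < length z' \<and> j < length z' \<and> Q a j \<and> R (z' ! a) (z' ! (a + 1)) (z' ! j)}"
  define S where "S = {(a, j). a + 1 < length z \<and> j < length z \<and> Q a j \<and> R (z ! a) (z ! (a + 1)) (z ! j)}"
  define A where "A = {a. a + 1 < length z \<and> Q a p \<and> R (z ! a) (z ! (a + 1)) (z ! p)}"
  have SS: "S = S' \<union> (\<lambda>a. (a, p)) ` A"
  proof (intro equalityI subsetI)
    fix q assume "q \<in> S"
    then obtain a j where q: "q = (a, j)" "a + 1 < length z" "j < length z" "Q a j" "R (z ! a) (z ! (a + 1)) (z ! j)"
      by (auto simp: S_def)
    show "q \<in> S' \<union> (\<lambda>a. (a, p)) ` A"
    proof (cases "j = p")
      case True then show ?thesis using q by (auto simp: A_def)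
    next
      case False then show ?thesis using q E1[of a j] len by (auto simp: S'_def)
    qed
  next
    fix q assume "q \<in> S' \<union> (\<lambda>a. (a, p)) ` A"
    then show "q \<in> S"
    proof
      assume "q \<in> S'"
      then obtain a j where q: "q = (a, j)" "a + 1 < length z" "j < length z" "Q a j" "R (z' ! a) (z' ! (a + 1)) (z' ! j)"
        using len by (auto simp: S'_def)
      have "j \<noteq> p" using E2[of a] q by auto
      then show "q \<in> S" using q E1[of a j] by (auto simp: S_def)
    next
      assume "q \<in> (\<lambda>a. (a, p)) ` A"
      then show "q \<in> S" using p by (auto simp: A_def S_def)
    qed
  qed
  have dis: "S' \<inter> (\<lambda>a. (a, p)) ` A = {}" using E2 len by (auto simp: S'_def A_def)
  have fS': "finite S'" unfolding S'_def by (rule PG_finite)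
  have fA: "finite A" by (rule finite_subset[of _ "{..<length z}"]) (auto simp: A_def)
  have "PG Q R z = card S" by (simp add: PG_def S_def)
  also have "\<dots> = card S' + card ((\<lambda>a. (a, p)) ` A)" unfolding SS
    by (rule card_Un_disjoint) (use fS' fA dis in auto)
  also have "card ((\<lambda>a. (a, p)) ` A) = card A" by (rule card_image) (auto simp: inj_on_def)
  finally show ?thesis by (simp add: PG_def S'_def A_def)
qed

definition cadj :: "('b \<Rightarrow> 'b \<Rightarrow> bool) \<Rightarrow> 'b list \<Rightarrow> nat" where
  "cadj P l = card {i. i + 1 < length l \<and> P (l ! i) (l ! (i + 1))}"

lemma cadj_Nil[simp]: "cadj P [] = 0" and cadj_single[simp]: "cadj P [a] = 0"
  by (auto simp: cadj_def)

lemma cadj_set_Cons: "{i. i + 1 < length (a # l) \<and> P ((a # l) ! i) ((a # l) ! (i + 1))}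
    = (if l \<noteq> [] \<and> P a (hd l) then {0} else {}) \<union> Suc ` {i. i + 1 < length l \<and> P (l ! i) (l ! (i + 1))}"
proof (intro equalityI subsetI)
  fix i assume i: "i \<in> {i. i + 1 < length (a # l) \<and> P ((a # l) ! i) ((a # l) ! (i + 1))}"
  show "i \<in> (if l \<noteq> [] \<and> P a (hd l) then {0} else {}) \<union> Suc ` {i. i + 1 < length l \<and> P (l ! i) (l ! (i + 1))}"
  proof (cases i)
    case 0 then show ?thesis using i by (cases l) auto
  next
    case (Suc k) then show ?thesis using i by auto
  qed
next
  fix i assume "i \<in> (if l \<noteq> [] \<and> P a (hd l) then {0} else {}) \<union> Suc ` {i. i + 1 < length l \<and> P (l ! i) (l ! (i + 1))}"
  then show "i \<in> {i. i + 1 < length (a # l) \<and> P ((a # l) ! i) ((a # l) ! (i + 1))}"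
    by (cases l) (auto split: if_splits simp: hd_conv_nth)
qed

lemma cadj_Cons: "cadj P (a # l) = (if l \<noteq> [] \<and> P a (hd l) then 1 else 0) + cadj P l"
proof -
  have f: "finite {i. i + 1 < length l \<and> P (l ! i) (l ! (i + 1))}"
    by (rule finite_subset[of _ "{..<length l}"]) auto
  show ?thesis unfolding cadj_def cadj_set_Cons
    by (subst card_Un_disjoint) (use f in \<open>auto simp: card_image\<close>)
qed

lemma cadj_Cons2[simp]: "cadj P (a # b # r) = (if P a b then 1 else 0) + cadj P (b # r)"
  by (subst cadj_Cons) simp

definition IR :: "enat \<Rightarrow> enat \<Rightarrow> bool" where "IR a b = (a = \<infinity> \<and> b \<noteq> \<infinity>)"
definition RI :: "enat \<Rightarrow> enat \<Rightarrow> bool" where "RI a b = (a \<noteq> \<infinity> \<and> b = \<infinity>)"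

lemma repl_nth:
  fixes m :: enat
  assumes vals: "\<forall>e \<in> set x \<union> set y. e = \<infinity> \<or> e < m"
  shows "\<And>k. k < length (x @ m # y) \<Longrightarrow> k \<noteq> length x \<Longrightarrow>
           (x @ \<infinity> # y) ! k = (x @ m # y) ! k \<and> ((x @ m # y) ! k = \<infinity> \<or> (x @ m # y) ! k < m)"
  using vals by (auto simp: nth_append nth_Cons' split: if_splits)

lemma inf_not_less[simp]: "\<not> (\<infinity>::enat) < x" by (cases x) auto

lemma R312_repl1: "(c::enat) = \<infinity> \<or> c < m \<Longrightarrow> R312 m b c = R312 \<infinity> b c"
  by (cases c; cases m) (auto simp: R312_def)
lemma R312_repl2: "(c::enat) = \<infinity> \<or> c < m \<Longrightarrow> R312 a m c = R312 a \<infinity> c"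
  by (cases c; cases m) (auto simp: R312_def)
lemma R213_repl1: "(c::enat) = \<infinity> \<or> c < m \<Longrightarrow> R213 m b c = R213 \<infinity> b c"
  by (cases c; cases m) (auto simp: R213_def)
lemma R213_repl2: "(c::enat) = \<infinity> \<or> c < m \<Longrightarrow> R213 a m c = R213 a \<infinity> c"
  by (cases c; cases m) (auto simp: R213_def)

lemma PG_replace_enat:
  fixes m :: enat
  assumes m: "m \<noteq> \<infinity>" and vals: "\<forall>e \<in> set x \<union> set y. e = \<infinity> \<or> e < m"
    and RR1: "\<And>b c. c = \<infinity> \<or> c < m \<Longrightarrow> R m b c = R \<infinity> b c"
    and RR2: "\<And>a c. c = \<infinity> \<or> c < m \<Longrightarrow> R a m c = R a \<infinity> c"
    and E2: "\<And>a b. \<not> R a b \<infinity>"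
  shows "PG Q R (x @ m # y) = PG Q R (x @ \<infinity> # y) + card {a. a + 1 < length (x @ m # y) \<and> Q a (length x) \<and> R ((x @ m # y) ! a) ((x @ m # y) ! (a + 1)) m}"
proof -
  let ?z = "x @ m # y" and ?z' = "x @ \<infinity> # y" and ?p = "length x"
  note rn = repl_nth[OF vals]
  have "PG Q R ?z = PG Q R ?z' + card {a. a + 1 < length ?z \<and> Q a ?p \<and> R (?z ! a) (?z ! (a + 1)) (?z ! ?p)}"
  proof (rule PG_replace)
    fix a j assume a: "a + 1 < length ?z" and j: "j < length ?z" "Q a j" "j \<noteq> ?p"
    have vj: "?z' ! j = ?z ! j" "?z ! j = \<infinity> \<or> ?z ! j < m" using rn[of j] j by auto
    show "R (?z ! a) (?z ! (a + 1)) (?z ! j) = R (?z' ! a) (?z' ! (a + 1)) (?z' ! j)"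
    proof (cases "a = ?p")
      case True
      then have "?z ! a = m" "?z' ! a = \<infinity>" "?z' ! (a+1) = ?z ! (a+1)" using rn[of "a+1"] a by auto
      then show ?thesis using vj RR1 by simp
    next
      case False
      then have e1: "?z' ! a = ?z ! a" using rn[of a] a by auto
      show ?thesis
      proof (cases "a + 1 = ?p")
        case True
        then have "?z ! (a+1) = m" "?z' ! (a+1) = \<infinity>" by auto
        then show ?thesis using vj RR2 e1 by simp
      next
        case False
        then have "?z' ! (a+1) = ?z ! (a+1)" using rn[of "a+1"] a by auto
        then show ?thesis using vj e1 by simp
      qed
    qed
  next
    fix a show "\<not> R (?z' ! a) (?z' ! (a + 1)) (?z' ! ?p)" using E2 by simp
  qed (use rn in auto)
  then show ?thesis by simp
qed

lemma L1_312:
  fixes m :: enat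
  assumes m: "m \<noteq> \<infinity>" and vals: "\<forall>e \<in> set x \<union> set y. e = \<infinity> \<or> e < m"
  shows "PG Q1 R312 (x @ m # y) = PG Q1 R312 (x @ \<infinity> # y) + cadj IR x"
proof -
  have *: "PG Q1 R312 (x @ m # y) = PG Q1 R312 (x @ \<infinity> # y) + card {a. a + 1 < length (x @ m # y) \<and> Q1 a (length x) \<and> R312 ((x @ m # y) ! a) ((x @ m # y) ! (a + 1)) m}"
    by (rule PG_replace_enat[where R=R312 and Q=Q1, OF m vals R312_repl1 R312_repl2]) (auto simp: R312_def)
  have "{a. a + 1 < length (x @ m # y) \<and> Q1 a (length x) \<and> R312 ((x @ m # y) ! a) ((x @ m # y) ! (a + 1)) m}
      = {i. i + 1 < length x \<and> IR (x ! i) (x ! (i + 1))}"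
  proof -
    have "R312 (x ! a) (x ! (a + 1)) m = IR (x ! a) (x ! (a + 1))" if "a + 1 < length x" for a
    proof -
      have "x ! a \<in> set x" "x ! (a+1) \<in> set x" using that by auto
      then have "x ! a = \<infinity> \<or> x ! a < m" "x ! (a+1) = \<infinity> \<or> x ! (a+1) < m" using vals by auto
      then show ?thesis using m by (auto simp: R312_def IR_def elim: less_enatE)
    qed
    then show ?thesis by (auto simp: Q1_def nth_append)
  qed
  with * show ?thesis by (simp add: cadj_def)
qed


lemma PG_replace_enat_R:
  fixes m :: enat
  assumes m: "m \<noteq> \<infinity>" and vals: "\<forall>e \<in> set x \<union> set y. e = \<infinity> \<or> e < m"
    and RR1: "\<And>b c. c = \<infinity> \<or> c < m \<Longrightarrow> R m b c = R \<infinity> b c"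
    and RR2: "\<And>a c. c = \<infinity> \<or> c < m \<Longrightarrow> R a m c = R a \<infinity> c"
    and E2: "\<And>a b. \<not> R a b \<infinity>"
    and P: "\<And>a b. a = \<infinity> \<or> a < m \<Longrightarrow> b = \<infinity> \<or> b < m \<Longrightarrow> R a b m = P a b"
  shows "PG Q2 R (x @ m # y) = PG Q2 R (x @ \<infinity> # y) + cadj P y"
proof -
  have *: "PG Q2 R (x @ m # y) = PG Q2 R (x @ \<infinity> # y) + card {a. a + 1 < length (x @ m # y) \<and> Q2 a (length x) \<and> R ((x @ m # y) ! a) ((x @ m # y) ! (a + 1)) m}"
    by (rule PG_replace_enat[where R=R and Q=Q2, OF m vals RR1 RR2 E2])
  have "{a. a + 1 < length (x @ m # y) \<and> Q2 a (length x) \<and> R ((x @ m # y) ! a) ((x @ m # y) ! (a + 1)) m}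
      = (\<lambda>t. Suc (length x) + t) ` {i. i + 1 < length y \<and> P (y ! i) (y ! (i + 1))}"
  proof -
    have RP: "R (y ! t) (y ! (t + 1)) m = P (y ! t) (y ! (t + 1))" if "t + 1 < length y" for t
    proof -
      have "y ! t \<in> set y" "y ! (t+1) \<in> set y" using that by auto
      then show ?thesis using vals P by auto
    qed
    show ?thesis
    proof (intro equalityI subsetI)
      fix a assume a: "a \<in> {a. a + 1 < length (x @ m # y) \<and> Q2 a (length x) \<and> R ((x @ m # y) ! a) ((x @ m # y) ! (a + 1)) m}"
      then have a1: "a + 1 < length (x @ m # y)" "length x < a" "R ((x @ m # y) ! a) ((x @ m # y) ! (a + 1)) m"
        by (auto simp: Q2_def)
      define t where "t = a - Suc (length x)"
      have at: "a = Suc (length x) + t" using a1 by (simp add: t_def)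
      have "t + 1 < length y" using a1 at by simp
      moreover have "(x @ m # y) ! a = y ! t" "(x @ m # y) ! (a + 1) = y ! (t + 1)" using at by (auto simp: nth_append)
      ultimately show "a \<in> (\<lambda>t. Suc (length x) + t) ` {i. i + 1 < length y \<and> P (y ! i) (y ! (i + 1))}"
        using a1 RP at by auto
    next
      fix a assume "a \<in> (\<lambda>t. Suc (length x) + t) ` {i. i + 1 < length y \<and> P (y ! i) (y ! (i + 1))}"
      then obtain t where t: "a = Suc (length x) + t" "t + 1 < length y" "P (y ! t) (y ! (t + 1))" by auto
      have "(x @ m # y) ! a = y ! t" "(x @ m # y) ! (a + 1) = y ! (t + 1)" using t by (auto simp: nth_append)
      then show "a \<in> {a. a + 1 < length (x @ m # y) \<and> Q2 a (length x) \<and> R ((x @ m # y) ! a) ((x @ m # y) ! (a + 1)) m}"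
        using t RP by (auto simp: Q2_def)
    qed
  qed
  moreover have "card ((\<lambda>t. Suc (length x) + t) ` {i. i + 1 < length y \<and> P (y ! i) (y ! (i + 1))}) = cadj P y"
    by (subst card_image) (auto simp: inj_on_def cadj_def)
  ultimately show ?thesis using * by simp
qed

lemma L1_213:
  fixes m :: enat
  assumes m: "m \<noteq> \<infinity>" and vals: "\<forall>e \<in> set x \<union> set y. e = \<infinity> \<or> e < m"
  shows "PG Q2 R213 (x @ m # y) = PG Q2 R213 (x @ \<infinity> # y) + cadj RI y"
  by (rule PG_replace_enat_R[where R=R213 and P=RI, OF m vals R213_repl1 R213_repl2])
     (use m in \<open>auto simp: R213_def RI_def elim: less_enatE\<close>)

lemma L1_231:
  fixes m :: enat
  assumes m: "m \<noteq> \<infinity>" and vals: "\<forall>e \<in> set x \<union> set y. e = \<infinity> \<or> e < m"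
  shows "PG Q2 R312 (x @ m # y) = PG Q2 R312 (x @ \<infinity> # y) + cadj IR y"
  by (rule PG_replace_enat_R[where R=R312 and P=IR, OF m vals R312_repl1 R312_repl2])
     (use m in \<open>auto simp: R312_def IR_def elim: less_enatE\<close>)

lemma HQ1_Q1: "Q1 a j \<Longrightarrow> a \<noteq> d \<Longrightarrow> Suc a \<noteq> d \<Longrightarrow> j \<noteq> d \<Longrightarrow>
                 Q1 (if a < d then a else a - 1) (if j < d then j else j - 1)"
  by (auto simp: Q1_def)
lemma HQ2_Q1: "Q1 a j \<Longrightarrow> Q1 (if a < d then a else Suc a) (if j < d then j else Suc j)"
  by (auto simp: Q1_def)
lemma HQ1_Q2: "Q2 a j \<Longrightarrow> a \<noteq> d \<Longrightarrow> Suc a \<noteq> d \<Longrightarrow> j \<noteq> d \<Longrightarrow>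
                 Q2 (if a < d then a else a - 1) (if j < d then j else j - 1)"
  by (auto simp: Q2_def)
lemma HQ2_Q2: "Q2 a j \<Longrightarrow> Q2 (if a < d then a else Suc a) (if j < d then j else Suc j)"
  by (auto simp: Q2_def)

lemma collapse_nth1:
  fixes x y :: "enat list"
  shows "k < length (x @ \<infinity> # y) \<Longrightarrow> (x @ \<infinity> # y) ! k = (x @ \<infinity> # \<infinity> # y) ! (if k < length x then k else Suc k)"
  by (auto simp: nth_append nth_Cons' split: if_splits)

lemma collapse_nth2:
  fixes x y :: "enat list"
  shows "k < length (x @ \<infinity> # y) \<Longrightarrow> (x @ \<infinity> # y) ! k = (x @ \<infinity> # \<infinity> # y) ! (if k < Suc (length x) then k else Suc k)"
  by (auto simp: nth_append nth_Cons' split: if_splits)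

lemma collapse_312:
  fixes x y :: "enat list"
  assumes Q: "Q = Q1 \<or> Q = Q2"
  shows "PG Q R312 (x @ \<infinity> # y) = PG Q R312 (x @ \<infinity> # \<infinity> # y)"
proof (rule PG_delete[where d = "length x"])
  fix a j assume "a + 1 < length (x @ \<infinity> # \<infinity> # y)" "j < length (x @ \<infinity> # \<infinity> # y)"
    "R312 ((x @ \<infinity> # \<infinity> # y) ! a) ((x @ \<infinity> # \<infinity> # y) ! (a + 1)) ((x @ \<infinity> # \<infinity> # y) ! j)"
  moreover have "(x @ \<infinity> # \<infinity> # y) ! length x = \<infinity>" "(x @ \<infinity> # \<infinity> # y) ! Suc (length x) = \<infinity>"
    by (simp_all add: nth_append)
  ultimately show "a \<noteq> length x \<and> Suc a \<noteq> length x \<and> j \<noteq> length x"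
    by (auto simp: R312_def)
next
  fix c show "\<not> R312 ((x @ \<infinity> # \<infinity> # y) ! (length x - 1)) ((x @ \<infinity> # \<infinity> # y) ! (length x + 1)) c"
    by (auto simp: R312_def nth_append)
next
  show "length (x @ \<infinity> # \<infinity> # y) = Suc (length (x @ \<infinity> # y))" by simp
next
  show "length x < length (x @ \<infinity> # \<infinity> # y)" by simp
next
  fix k assume "k < length (x @ \<infinity> # y)"
  then show "(x @ \<infinity> # y) ! k = (x @ \<infinity> # \<infinity> # y) ! (if k < length x then k else Suc k)"
    by (rule collapse_nth1)
next
  fix a j assume "Q a j" "a \<noteq> length x" "Suc a \<noteq> length x" "j \<noteq> length x"
  then show "Q (if a < length x then a else a - 1) (if j < length x then j else j - 1)"
    using Q HQ1_Q1[of a j "length x"] HQ1_Q2[of a j "length x"] by blast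
next
  fix a j assume "Q a j"
  then show "Q (if a < length x then a else Suc a) (if j < length x then j else Suc j)"
    using Q HQ2_Q1[of a j "length x"] HQ2_Q2[of a j "length x"] by blast
qed

lemma collapse_213:
  fixes x y :: "enat list"
  shows "PG Q2 R213 (x @ \<infinity> # y) = PG Q2 R213 (x @ \<infinity> # \<infinity> # y)"
proof (rule PG_delete[where d = "Suc (length x)"])
  fix a j assume "a + 1 < length (x @ \<infinity> # \<infinity> # y)" "j < length (x @ \<infinity> # \<infinity> # y)"
    "R213 ((x @ \<infinity> # \<infinity> # y) ! a) ((x @ \<infinity> # \<infinity> # y) ! (a + 1)) ((x @ \<infinity> # \<infinity> # y) ! j)"
  moreover have "(x @ \<infinity> # \<infinity> # y) ! length x = \<infinity>" "(x @ \<infinity> # \<infinity> # y) ! Suc (length x) = \<infinity>"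
    by (simp_all add: nth_append)
  ultimately show "a \<noteq> Suc (length x) \<and> Suc a \<noteq> Suc (length x) \<and> j \<noteq> Suc (length x)"
    by (auto simp: R213_def)
next
  fix c show "\<not> R213 ((x @ \<infinity> # \<infinity> # y) ! (Suc (length x) - 1)) ((x @ \<infinity> # \<infinity> # y) ! (Suc (length x) + 1)) c"
    by (auto simp: R213_def nth_append)
next
  show "length (x @ \<infinity> # \<infinity> # y) = Suc (length (x @ \<infinity> # y))" by simp
next
  show "Suc (length x) < length (x @ \<infinity> # \<infinity> # y)" by simp
next
  fix k assume "k < length (x @ \<infinity> # y)"
  then show "(x @ \<infinity> # y) ! k = (x @ \<infinity> # \<infinity> # y) ! (if k < Suc (length x) then k else Suc k)"
    by (rule collapse_nth2)
next
  fix a j assume "Q2 a j" "a \<noteq> Suc (length x)" "Suc a \<noteq> Suc (length x)" "j \<noteq> Suc (length x)"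
  then show "Q2 (if a < Suc (length x) then a else a - 1) (if j < Suc (length x) then j else j - 1)"
    by (rule HQ1_Q2)
next
  fix a j assume "Q2 a j"
  then show "Q2 (if a < Suc (length x) then a else Suc a) (if j < Suc (length x) then j else Suc j)"
    by (rule HQ2_Q2)
qed


lemma PG_Cons0:
  fixes w :: "enat list"
  assumes A: "\<And>b c j. Q 0 j \<Longrightarrow> \<not> R 0 b c" and B: "\<And>a b. \<not> R a b 0"
    and HQ1: "\<And>a j. Q a j \<Longrightarrow> a \<noteq> 0 \<Longrightarrow> Suc a \<noteq> 0 \<Longrightarrow> j \<noteq> 0 \<Longrightarrow>
                 Q (if a < 0 then a else a - 1) (if j < 0 then j else j - 1)"
    and HQ2: "\<And>a j. Q a j \<Longrightarrow> Q (if a < 0 then a else Suc a) (if j < 0 then j else Suc j)"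
  shows "PG Q R (0 # w) = PG Q R w"
proof -
  have "PG Q R w = PG Q R (0 # w)"
  proof (rule PG_delete[where d = 0])
    fix a j assume "a + 1 < length (0 # w)" "j < length (0 # w)" "Q a j"
      "R ((0 # w) ! a) ((0 # w) ! (a + 1)) ((0 # w) ! j)"
    then show "a \<noteq> 0 \<and> Suc a \<noteq> 0 \<and> j \<noteq> 0" using A B by (cases a; cases j) auto
  qed (use HQ1 HQ2 in auto)
  then show ?thesis by simp
qed

lemma PG_Cons0_312_Q1: "PG Q1 R312 (0 # (w::enat list)) = PG Q1 R312 w"
  by (rule PG_Cons0) (auto simp: R312_def Q1_def)
lemma PG_Cons0_312_Q2: "PG Q2 R312 (0 # (w::enat list)) = PG Q2 R312 w"
  by (rule PG_Cons0) (auto simp: R312_def Q2_def)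
lemma PG_Cons0_213_Q2: "PG Q2 R213 (0 # (w::enat list)) = PG Q2 R213 w"
  by (rule PG_Cons0) (auto simp: R213_def Q2_def)

lemma PG_snoc:
  fixes w :: "enat list"
  assumes C: "\<And>a j. a + 1 < length (w @ [e]) \<Longrightarrow> j < length (w @ [e]) \<Longrightarrow> Q a j \<Longrightarrow>
       R ((w @ [e]) ! a) ((w @ [e]) ! (a + 1)) ((w @ [e]) ! j) \<Longrightarrow> Suc a \<noteq> length w \<and> j \<noteq> length w"
    and HQ1: "\<And>a j. Q a j \<Longrightarrow> a \<noteq> length w \<Longrightarrow> Suc a \<noteq> length w \<Longrightarrow> j \<noteq> length w \<Longrightarrow>
                 Q (if a < length w then a else a - 1) (if j < length w then j else j - 1)"
    and HQ2: "\<And>a j. Q a j \<Longrightarrow> Q (if a < length w then a else Suc a) (if j < length w then j else Suc j)"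
  shows "PG Q R (w @ [e]) = PG Q R w"
proof -
  have "PG Q R w = PG Q R (w @ [e])"
  proof (rule PG_delete[where d = "length w"])
    fix a j assume "a + 1 < length (w @ [e])" "j < length (w @ [e])" "Q a j"
      "R ((w @ [e]) ! a) ((w @ [e]) ! (a + 1)) ((w @ [e]) ! j)"
    then show "a \<noteq> length w \<and> Suc a \<noteq> length w \<and> j \<noteq> length w" using C by auto
  next
    fix k assume "k < length w"
    then show "w ! k = (w @ [e]) ! (if k < length w then k else Suc k)" by (simp add: nth_append)
  qed (use HQ1 HQ2 in auto)
  then show ?thesis by simp
qed

lemma PG_snoc_312_Q1: "e = 0 \<or> e = \<infinity> \<Longrightarrow> PG Q1 R312 ((w::enat list) @ [e]) = PG Q1 R312 w"
  by (rule PG_snoc) (auto simp: R312_def Q1_def nth_append)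
lemma PG_snoc_213_Q2: "PG Q2 R213 ((w::enat list) @ [0]) = PG Q2 R213 w"
  by (rule PG_snoc) (auto simp: R213_def Q2_def nth_append)
lemma PG_snoc_312_Q2: "PG Q2 R312 ((w::enat list) @ [\<infinity>]) = PG Q2 R312 w"
  by (rule PG_snoc) (auto simp: R312_def Q2_def nth_append)

lemma PG_map_enat:
  assumes "\<And>a b c. R (enat a) (enat b) (enat c) = R' a b c"
  shows "PG Q R (map enat s) = PG Q R' s"
  unfolding PG_def using assms by (intro arg_cong[where f = card]) auto

lemma PG_map_enat_312: "PG Q R312 (map enat s) = PG Q R312 s"
  by (rule PG_map_enat) (simp add: R312_def)
lemma PG_map_enat_213: "PG Q R213 (map enat s) = PG Q R213 s"
  by (rule PG_map_enat) (simp add: R213_def)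

lemma pat_31_2_PG: "pat_31_2 s = PG Q1 R312 s"
  unfolding pat_31_2_def PG_def Q1_def R312_def
  by (rule arg_cong[where f = card]) auto

lemma pat_shift:
  "card {(i, j). 1 \<le> i \<and> i < length s \<and> j + 1 < i \<and> R (s ! (i - 1)) (s ! i) (s ! j)}
   = PG Q2 R s"
proof -
  have "{(i, j). 1 \<le> i \<and> i < length s \<and> j + 1 < i \<and> R (s ! (i - 1)) (s ! i) (s ! j)}
     = (\<lambda>(a, j). (Suc a, j)) ` {(a, j). a + 1 < length s \<and> j < length s \<and> Q2 a j \<and> R (s ! a) (s ! (a + 1)) (s ! j)}"
  proof (intro equalityI subsetI)
    fix p assume "p \<in> {(i, j). 1 \<le> i \<and> i < length s \<and> j + 1 < i \<and> R (s ! (i - 1)) (s ! i) (s ! j)}"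
    then obtain i j where p: "p = (i, j)" "1 \<le> i" "i < length s" "j + 1 < i" "R (s ! (i - 1)) (s ! i) (s ! j)" by auto
    then have "p = (Suc (i - 1), j)" "(i - 1, j) \<in> {(a, j). a + 1 < length s \<and> j < length s \<and> Q2 a j \<and> R (s ! a) (s ! (a + 1)) (s ! j)}"
      by (auto simp: Q2_def)
    then show "p \<in> (\<lambda>(a, j). (Suc a, j)) ` {(a, j). a + 1 < length s \<and> j < length s \<and> Q2 a j \<and> R (s ! a) (s ! (a + 1)) (s ! j)}"
      by force
  qed (auto simp: Q2_def)
  moreover have "inj_on (\<lambda>(a, j). (Suc a, j)) {(a, j). a + 1 < length s \<and> j < length s \<and> Q2 a j \<and> R (s ! a) (s ! (a + 1)) (s ! j)}"
    by (auto simp: inj_on_def)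
  ultimately show ?thesis unfolding PG_def by (simp only: card_image)
qed

lemma pat_2_13_PG: "pat_2_13 s = PG Q2 R213 s"
  unfolding pat_2_13_def pat_shift[symmetric] R213_def by simp

lemma pat_2_31_PG: "pat_2_31 s = PG Q2 R312 s"
  unfolding pat_2_31_def pat_shift[symmetric] R312_def by simp

lemma stat_odd:
  "PG Q1 R312 (0 # map enat s @ [0]) = pat_31_2 s"
  "PG Q2 R213 (0 # map enat s @ [0]) = pat_2_13 s"
  by (simp_all add: PG_Cons0_312_Q1 PG_Cons0_213_Q2 PG_snoc_312_Q1 PG_snoc_213_Q2
      pat_31_2_PG pat_2_13_PG PG_map_enat_312 PG_map_enat_213)

lemma stat_even:
  "PG Q1 R312 (0 # map enat s @ [\<infinity>]) = pat_31_2 s"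
  "PG Q2 R312 (0 # map enat s @ [\<infinity>]) = pat_2_31 s"
  by (simp_all add: PG_Cons0_312_Q1 PG_Cons0_312_Q2 PG_snoc_312_Q1 PG_snoc_312_Q2
      pat_31_2_PG pat_2_31_PG PG_map_enat_312)


fun altu :: "bool \<Rightarrow> enat list \<Rightarrow> bool" where
  "altu u (a # b # r) = ((if u then a < b else b < a) \<and> altu (\<not> u) (b # r))"
| "altu u _ = True"

lemma altu_append: "altu u (xs @ a # ys) = (altu u (xs @ [a]) \<and> altu (u = even (length xs)) (a # ys))"
proof (induction xs arbitrary: u)
  case Nil then show ?case by (cases ys) auto
next
  case (Cons c xs)
  show ?case
  proof (cases xs)
    case Nil then show ?thesis by (cases ys) auto
  next
    case (Cons d xs')
    have "altu u (c # xs @ a # ys) = ((if u then c < d else d < c) \<and> altu (\<not> u) (xs @ a # ys))"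
      using Cons by simp
    also have "\<dots> = ((if u then c < d else d < c) \<and> altu (\<not> u) (xs @ [a]) \<and> altu ((\<not> u) = even (length xs)) (a # ys))"
      using Cons.IH by simp
    also have "\<dots> = (altu u (c # xs @ [a]) \<and> altu (u = even (length (c # xs))) (a # ys))"
      using Cons by auto
    finally show ?thesis by simp
  qed
qed

fun noadj :: "enat list \<Rightarrow> bool" where
  "noadj (a # b # r) = (\<not> (a = \<infinity> \<and> b = \<infinity>) \<and> noadj (b # r))"
| "noadj _ = True"

lemma altu_noadj: "altu u l \<Longrightarrow> noadj l"
  by (induction u l rule: altu.induct) (auto split: if_splits)

lemma noadj_append: "noadj (xs @ ys) = (noadj xs \<and> noadj ys \<and> \<not> (xs \<noteq> [] \<and> ys \<noteq> [] \<and> last xs = \<infinity> \<and> hd ys = \<infinity>))"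
proof (induction xs)
  case Nil then show ?case by simp
next
  case (Cons a xs) then show ?case
    by (cases xs; cases ys) auto
qed

lemma noadj_Cons: "noadj (a # l) = (noadj l \<and> \<not> (l \<noteq> [] \<and> a = \<infinity> \<and> hd l = \<infinity>))"
  by (cases l) auto

abbreviation cnt :: "enat list \<Rightarrow> nat" where "cnt l \<equiv> count_list l \<infinity>"

lemma cnt_last_pos: "l \<noteq> [] \<Longrightarrow> last l = a \<Longrightarrow> count_list l a > 0"
  by (metis count_list_0_iff last_in_set neq0_conv)
lemma cnt_hd_pos: "l \<noteq> [] \<Longrightarrow> hd l = a \<Longrightarrow> count_list l a > 0"
  by (metis count_list_0_iff hd_in_set neq0_conv)

lemma cadj_IR: "noadj l \<Longrightarrow> cadj IR l = cnt l - (if l \<noteq> [] \<and> last l = \<infinity> then 1 else 0)"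
proof (induction l)
  case Nil then show ?case by simp
next
  case (Cons a l)
  then show ?case
    using cnt_last_pos[of l \<infinity>] by (cases l) (auto simp: cadj_Cons IR_def noadj_Cons)
qed

lemma cadj_RI: "noadj l \<Longrightarrow> cadj RI l = cnt l - (if l \<noteq> [] \<and> hd l = \<infinity> then 1 else 0)"
proof (induction l)
  case Nil then show ?case by simp
next
  case (Cons a l)
  then show ?case
    using cnt_hd_pos[of l \<infinity>] by (cases l) (auto simp: cadj_Cons RI_def noadj_Cons)
qed

lemma decomp_Cons:
  "{(x, y). b # l = x @ a # y} = (if b = a then {([], l)} else {}) \<union> (\<lambda>(x, y). (b # x, y)) ` {(x, y). l = x @ a # y}"
proof (intro equalityI subsetI)
  fix p assume "p \<in> {(x, y). b # l = x @ a # y}"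
  then obtain x y where p: "p = (x, y)" "b # l = x @ a # y" by auto
  show "p \<in> (if b = a then {([], l)} else {}) \<union> (\<lambda>(x, y). (b # x, y)) ` {(x, y). l = x @ a # y}"
  proof (cases x)
    case Nil then show ?thesis using p by auto
  next
    case (Cons c x')
    then have "c = b" "l = x' @ a # y" using p by auto
    then show ?thesis using p Cons by auto
  qed
qed (auto split: if_splits)

lemma decomp_finite: "finite {(x, y). l = x @ a # y}"
proof (induction l)
  case Nil then show ?case by simp
next
  case (Cons b l) then show ?case by (simp add: decomp_Cons)
qed

lemma decomp_sum:
  fixes f :: "nat \<Rightarrow> nat \<Rightarrow> 'c::comm_monoid_add"
  shows "(\<Sum>(x, y) \<in> {(x, y). l = x @ a # y}. f (count_list x a) (count_list y a))
     = (\<Sum>g < count_list l a. f g (count_list l a - 1 - g))"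
proof (induction l arbitrary: f)
  case Nil then show ?case by simp
next
  case (Cons b l)
  have inj: "inj_on (\<lambda>(x, y). (b # x, y)) A" for A
    by (auto simp: inj_on_def)
  have disj: "(if b = a then {([], l)} else {}) \<inter> (\<lambda>(x, y). (b # x, y)) ` {(x, y). l = x @ a # y} = {}"
    by auto
  have "(\<Sum>(x, y) \<in> {(x, y). b # l = x @ a # y}. f (count_list x a) (count_list y a))
     = (\<Sum>(x, y) \<in> (if b = a then {([], l)} else {}). f (count_list x a) (count_list y a))
       + (\<Sum>(x, y) \<in> (\<lambda>(x, y). (b # x, y)) ` {(x, y). l = x @ a # y}. f (count_list x a) (count_list y a))"
    unfolding decomp_Cons by (rule sum.union_disjoint) (use finite_imageI[OF decomp_finite] disj in auto)
  also have "(\<Sum>(x, y) \<in> (\<lambda>(x, y). (b # x, y)) ` {(x, y). l = x @ a # y}. f (count_list x a) (count_list y a))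
     = (\<Sum>(x, y) \<in> {(x, y). l = x @ a # y}. f (count_list x a + (if b = a then 1 else 0)) (count_list y a))"
    by (subst sum.reindex[OF inj]) (auto intro: sum.cong)
  also have "\<dots> = (\<Sum>g < count_list l a. f (g + (if b = a then 1 else 0)) (count_list l a - 1 - g))"
    using Cons.IH[of "\<lambda>g k. f (g + (if b = a then 1 else 0)) k"] by simp
  finally show ?case
    by (cases "b = a") (simp_all del: sum.lessThan_Suc add: sum.lessThan_Suc_shift)
qed

lemma decomp1_eq:
  "{(x, y). l @ [c] = x @ a # y \<and> y \<noteq> []} = (\<lambda>(x, y). (x, y @ [c])) ` {(x, y). l = x @ a # y}"
proof (intro equalityI subsetI)
  fix p assume "p \<in> {(x, y). l @ [c] = x @ a # y \<and> y \<noteq> []}"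
  then obtain x y where p: "p = (x, y)" "l @ [c] = x @ a # y" "y \<noteq> []" by auto
  have "last (l @ [c]) = last (x @ a # y)" by (simp only: p(2))
  then have "last y = c" using p(3) by simp
  then obtain y' where y': "y = y' @ [c]" using p(3) by (metis append_butlast_last_id)
  then have "l = x @ a # y'" using p by simp
  then show "p \<in> (\<lambda>(x, y). (x, y @ [c])) ` {(x, y). l = x @ a # y}" using p y' by auto
qed auto


abbreviation RL :: "enat list \<Rightarrow> enat list" where
  "RL z \<equiv> filter (\<lambda>a. a \<noteq> \<infinity> \<and> a \<noteq> 0) z"

definition Obj :: "enat \<Rightarrow> nat \<Rightarrow> nat \<Rightarrow> enat list set" where
  "Obj e v h = {z. z \<noteq> [] \<and> hd z = 0 \<and> last z = e \<and> altu True z \<and>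
      count_list z 0 = (if e = 0 then 2 else 1) \<and> distinct (RL z) \<and> set (RL z) = enat ` {1..v} \<and> cnt z = h}"

declare not_infinity_eq[iff del]

lemma ObjD:
  assumes "z \<in> Obj e v h"
  shows "z \<noteq> []" "hd z = 0" "last z = e" "altu True z" "count_list z 0 = (if e = 0 then 2 else 1)"
    "distinct (RL z)" "set (RL z) = enat ` {1..v}" "cnt z = h"
  using assms unfolding Obj_def mem_Collect_eq by blast+

lemma ObjI:
  assumes "z \<noteq> []" "hd z = 0" "last z = e" "altu True z" "count_list z 0 = (if e = 0 then 2 else 1)"
    "distinct (RL z)" "set (RL z) = enat ` {1..v}" "cnt z = h"
  shows "z \<in> Obj e v h"
  using assms unfolding Obj_def mem_Collect_eq by blast

lemma lt_inf_iff: "(a::enat) < \<infinity> \<longleftrightarrow> a \<noteq> \<infinity>" by (cases a) auto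
lemma lt_not_inf: "(a::enat) < b \<Longrightarrow> a \<noteq> \<infinity>" by (cases a) auto

lemma altu_fill_aux:
  assumes "altu True (x @ \<infinity> # y)" "x \<noteq> []" "y \<noteq> []" "last x < m" "hd y < m"
  shows "altu True (x @ m # y)"
proof -
  obtain x0 \<alpha> where x: "x = x0 @ [\<alpha>]" using assms(2) by (metis append_butlast_last_id)
  obtain \<beta> y1 where y: "y = \<beta> # y1" using assms(3) by (cases y) auto
  have A: "altu True (x0 @ \<alpha> # \<infinity> # \<beta> # y1)" using assms(1) x y by simp
  have a12: "altu True (x0 @ [\<alpha>]) \<and> altu (even (length x0)) (\<alpha> # \<infinity> # \<beta> # y1)" using A altu_append[of True x0 \<alpha> "\<infinity> # \<beta> # y1"] by (simp del: altu.simps)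
  then have a1: "altu True (x0 @ [\<alpha>])" and a2: "altu (even (length x0)) (\<alpha> # \<infinity> # \<beta> # y1)" by blast+
  from a2 have ev: "even (length x0)" and r: "altu True (\<beta> # y1)"
    by (auto split: if_splits)
  have "altu True (x0 @ \<alpha> # m # \<beta> # y1)"
    unfolding altu_append[of True x0 \<alpha> "m # \<beta> # y1"] using a1 ev r assms(4,5) x y by auto
  then show ?thesis using x y by simp
qed

lemma altu_split_aux:
  assumes "altu True (x @ \<infinity> # y)" "x \<noteq> []" "m < \<infinity>"
  shows "altu True (x @ \<infinity> # m # \<infinity> # y)"
proof -
  obtain x0 \<alpha> where x: "x = x0 @ [\<alpha>]" using assms(2) by (metis append_butlast_last_id)
  have A: "altu True (x0 @ \<alpha> # \<infinity> # y)" using assms(1) x by simp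
  have a12: "altu True (x0 @ [\<alpha>]) \<and> altu (even (length x0)) (\<alpha> # \<infinity> # y)" using A altu_append[of True x0 \<alpha> "\<infinity> # y"] by (simp del: altu.simps)
  then have a1: "altu True (x0 @ [\<alpha>])" and a2: "altu (even (length x0)) (\<alpha> # \<infinity> # y)" by blast+
  from a2 have ev: "even (length x0)" and r: "altu False (\<infinity> # y)" and al: "\<alpha> < \<infinity>"
    by (auto split: if_splits)
  have "altu True (x0 @ \<alpha> # \<infinity> # m # \<infinity> # y)"
    unfolding altu_append[of True x0 \<alpha> "\<infinity> # m # \<infinity> # y"] using a1 ev r al assms(3) by auto
  then show ?thesis using x by simp
qed

lemma altu_remove_aux:
  fixes m :: enat
  assumes A: "altu True (x @ m # y)" and xn: "x \<noteq> []" and yn: "y \<noteq> []"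
    and m: "m \<noteq> \<infinity>" and vals: "\<forall>e \<in> set x \<union> set y. e = \<infinity> \<or> e < m"
  shows "(last x \<noteq> \<infinity> \<and> hd y \<noteq> \<infinity> \<and> altu True (x @ \<infinity> # y)) \<or>
         (last x = \<infinity> \<and> hd y = \<infinity> \<and> altu True (butlast x @ \<infinity> # tl y))"
proof -
  obtain x0 \<alpha> where x: "x = x0 @ [\<alpha>]" using xn by (metis append_butlast_last_id)
  obtain \<beta> y1 where y: "y = \<beta> # y1" using yn by (cases y) auto
  have va: "\<alpha> = \<infinity> \<or> \<alpha> < m" and vb: "\<beta> = \<infinity> \<or> \<beta> < m" using vals x y by auto
  have A': "altu True (x0 @ \<alpha> # m # \<beta> # y1)" using A x y by simp
  have a12: "altu True (x0 @ [\<alpha>]) \<and> altu (even (length x0)) (\<alpha> # m # \<beta> # y1)" using A' altu_append[of True x0 \<alpha> "m # \<beta> # y1"] by (simp del: altu.simps)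
  then have a1: "altu True (x0 @ [\<alpha>])" and a2: "altu (even (length x0)) (\<alpha> # m # \<beta> # y1)" by blast+
  show ?thesis
  proof (cases "\<alpha> = \<infinity>")
    case False
    with va have al: "\<alpha> < m" by simp
    with a2 have ev: "even (length x0)" and bm: "\<beta> < m" and r: "altu True (\<beta> # y1)"
      by (auto split: if_splits)
    have bi: "\<beta> \<noteq> \<infinity>" using bm by (cases \<beta>) auto
    have ai: "\<alpha> \<noteq> \<infinity>" using False .
    have "altu True (x0 @ \<alpha> # \<infinity> # \<beta> # y1)"
      unfolding altu_append[of True x0 \<alpha> "\<infinity> # \<beta> # y1"] using a1 ev r ai bi by (auto simp: lt_inf_iff)
    then show ?thesis using x y ai bi by simp
  next
    case True
    with a2 have ev: "odd (length x0)" and mb: "m < \<beta>" and r: "altu False (\<beta> # y1)"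
      by (auto split: if_splits)
    have bi: "\<beta> = \<infinity>" using mb vb by auto
    have "altu True (x0 @ \<infinity> # y1)"
      unfolding altu_append[of True x0 \<infinity> y1] using a1 ev r True bi by auto
    then show ?thesis using x y True bi by simp
  qed
qed


definition st :: "enat \<Rightarrow> enat list \<Rightarrow> nat" where
  "st e z = PG Q1 R312 z + 2 * (if e = 0 then PG Q2 R213 z else PG Q2 R312 z)"

lemma obj_vals: "z \<in> Obj e v h \<Longrightarrow> a \<in> set z \<Longrightarrow> a = \<infinity> \<or> a = 0 \<or> (\<exists>k. a = enat k \<and> 1 \<le> k \<and> k \<le> v)"
proof -
  assume z: "z \<in> Obj e v h" and a: "a \<in> set z"
  show ?thesis
  proof (cases "a = \<infinity> \<or> a = 0")
    case False
    then have "a \<in> set (RL z)" using a by auto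
    then have "a \<in> enat ` {1..v}" using ObjD(7)[OF z] by (simp only:)
    then show ?thesis by auto
  qed auto
qed

lemma obj_vals_lt: "z \<in> Obj e v h \<Longrightarrow> a \<in> set z \<Longrightarrow> a = \<infinity> \<or> a < enat (Suc v)"
  by (drule obj_vals) (auto simp: zero_enat_def)

lemma Obj_noadj: "z \<in> Obj e v h \<Longrightarrow> noadj z"
  by (auto simp: Obj_def intro: altu_noadj)

lemma Obj_x_ne: "x @ \<infinity> # y \<in> Obj e v h \<Longrightarrow> x \<noteq> []"
  by (auto simp: Obj_def zero_enat_def)

lemma noadj_mid:
  assumes "noadj (x @ \<infinity> # y)"
  shows "noadj x" "noadj y" "x \<noteq> [] \<Longrightarrow> last x \<noteq> \<infinity>" "y \<noteq> [] \<Longrightarrow> hd y \<noteq> \<infinity>"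
proof -
  have *: "noadj x \<and> noadj (\<infinity> # y) \<and> \<not> (x \<noteq> [] \<and> last x = \<infinity>)"
    using assms noadj_append[of x "\<infinity> # y"] by simp
  then show "noadj x" "x \<noteq> [] \<Longrightarrow> last x \<noteq> \<infinity>" by auto
  from * show "noadj y" "y \<noteq> [] \<Longrightarrow> hd y \<noteq> \<infinity>" by (auto simp: noadj_Cons)
qed

lemma fill_obj:
  assumes z': "x @ \<infinity> # y \<in> Obj e v (Suc h)" and yn: "y \<noteq> []"
  shows "x @ enat (Suc v) # y \<in> Obj e (Suc v) h"
proof -
  let ?m = "enat (Suc v)"
  have xn: "x \<noteq> []" using Obj_x_ne[OF z'] .
  note na = noadj_mid[OF Obj_noadj[OF z']]
  have lx: "last x \<noteq> \<infinity>" and hy: "hd y \<noteq> \<infinity>" using na xn yn by auto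
  have vals: "\<forall>a \<in> set x \<union> set y. a = \<infinity> \<or> a < ?m" using obj_vals_lt[OF z'] by auto
  have "last x \<in> set x" using xn by (rule last_in_set)
  then have "last x < ?m" using vals lx by blast
  moreover have "hd y \<in> set y" using yn by (rule hd_in_set)
  then have "hd y < ?m" using vals hy by blast
  moreover have "altu True (x @ \<infinity> # y)" using ObjD(4)[OF z'] .
  ultimately have alt: "altu True (x @ ?m # y)" using altu_fill_aux xn yn by blast
  have mR: "?m \<notin> set (RL x @ RL y)" using vals by auto
  have "set (RL (x @ \<infinity> # y)) = enat ` {1..v}" using ObjD(7)[OF z'] .
  then have "set (RL (x @ ?m # y)) = insert ?m (enat ` {1..v})" by (simp add: zero_enat_def)
  also have "\<dots> = enat ` {1..Suc v}" by (auto simp: atLeastAtMostSuc_conv)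
  finally have sR: "set (RL (x @ ?m # y)) = enat ` {1..Suc v}" .
  show ?thesis
  proof (rule ObjI)
    show "distinct (RL (x @ ?m # y))" using ObjD(6)[OF z'] mR by (auto simp: zero_enat_def)
    show "count_list (x @ ?m # y) 0 = (if e = 0 then 2 else 1)" using ObjD(5)[OF z'] by (simp add: zero_enat_def)
    show "cnt (x @ ?m # y) = h" using ObjD(8)[OF z'] by simp
    show "last (x @ ?m # y) = e" using ObjD(3)[OF z'] yn by simp
    show "hd (x @ ?m # y) = 0" using ObjD(2)[OF z'] xn by simp
  qed (use alt sR in auto)
qed

lemma last_split: "last (x @ \<infinity> # m # \<infinity> # y) = last (x @ \<infinity> # y)"
  by (cases y) auto

lemma split_obj:
  assumes z': "x @ \<infinity> # y \<in> Obj e v h"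
  shows "x @ \<infinity> # enat (Suc v) # \<infinity> # y \<in> Obj e (Suc v) (Suc h)"
proof -
  let ?m = "enat (Suc v)"
  have xn: "x \<noteq> []" using Obj_x_ne[OF z'] .
  have vals: "\<forall>a \<in> set x \<union> set y. a = \<infinity> \<or> a < ?m" using obj_vals_lt[OF z'] by auto
  have alt: "altu True (x @ \<infinity> # ?m # \<infinity> # y)" using ObjD(4)[OF z'] xn altu_split_aux[of x y ?m] by simp
  have mR: "?m \<notin> set (RL x @ RL y)" using vals by auto
  have "set (RL (x @ \<infinity> # y)) = enat ` {1..v}" using ObjD(7)[OF z'] .
  then have "set (RL (x @ \<infinity> # ?m # \<infinity> # y)) = insert ?m (enat ` {1..v})" by (simp add: zero_enat_def)
  also have "\<dots> = enat ` {1..Suc v}" by (auto simp: atLeastAtMostSuc_conv)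
  finally have sR: "set (RL (x @ \<infinity> # ?m # \<infinity> # y)) = enat ` {1..Suc v}" .
  show ?thesis
  proof (rule ObjI)
    show "distinct (RL (x @ \<infinity> # ?m # \<infinity> # y))" using ObjD(6)[OF z'] mR by (auto simp: zero_enat_def)
    show "count_list (x @ \<infinity> # ?m # \<infinity> # y) 0 = (if e = 0 then 2 else 1)" using ObjD(5)[OF z'] by (simp add: zero_enat_def)
    show "cnt (x @ \<infinity> # ?m # \<infinity> # y) = Suc h" using ObjD(8)[OF z'] by simp
    show "last (x @ \<infinity> # ?m # \<infinity> # y) = e" using ObjD(3)[OF z'] last_split[of x ?m y] by simp
    show "hd (x @ \<infinity> # ?m # \<infinity> # y) = 0" using ObjD(2)[OF z'] xn by simp
  qed (use alt sR in auto)
qed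


lemma remove_obj:
  assumes z: "z \<in> Obj e (Suc v) h" and e: "e = 0 \<or> e = \<infinity>" and zd: "z = x @ enat (Suc v) # y"
  shows "x \<noteq> []" "y \<noteq> []" "enat (Suc v) \<notin> set x" "enat (Suc v) \<notin> set y"
    and "last x \<noteq> \<infinity> \<Longrightarrow> x @ \<infinity> # y \<in> Obj e v (Suc h)"
    and "last x = \<infinity> \<Longrightarrow> hd y = \<infinity> \<and> 0 < h \<and> butlast x @ \<infinity> # tl y \<in> Obj e v (h - 1)"
proof -
  let ?m = "enat (Suc v)"
  have m0: "?m \<noteq> 0" "?m \<noteq> \<infinity>" by (auto simp: zero_enat_def)
  note zD = ObjD[OF z]
  show xn: "x \<noteq> []" using zD(2) zd m0 by (cases x) auto
  show yn: "y \<noteq> []" using zD(3) zd m0 e by (cases y rule: rev_cases) auto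
  have RLz: "RL z = RL x @ ?m # RL y" using zd m0 by simp
  have dis: "distinct (RL x @ ?m # RL y)" using zD(6) RLz by simp
  show mx: "?m \<notin> set x" using dis m0 by auto
  show my: "?m \<notin> set y" using dis m0 by auto
  have vals: "\<forall>a \<in> set x \<union> set y. a = \<infinity> \<or> a < ?m"
  proof
    fix a assume a: "a \<in> set x \<union> set y"
    then have "a \<in> set z" using zd by auto
    from obj_vals[OF z this] have "a = \<infinity> \<or> a = 0 \<or> (\<exists>k. a = enat k \<and> 1 \<le> k \<and> k \<le> Suc v)" .
    moreover have "a \<noteq> ?m" using a mx my by auto
    ultimately show "a = \<infinity> \<or> a < ?m" by (auto simp: zero_enat_def)
  qed
  have setR: "set (RL x) \<union> set (RL y) = enat ` {1..v}"
  proof -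
    have "set (RL x) \<union> set (RL y) = set (RL z) - {?m}" using RLz dis by auto
    also have "\<dots> = enat ` {1..v}" using zD(7) by auto
    finally show ?thesis .
  qed
  have alt: "altu True (x @ ?m # y)" using zD(4) zd by simp
  note R = altu_remove_aux[OF alt xn yn m0(2) vals]
  show "x @ \<infinity> # y \<in> Obj e v (Suc h)" if lx: "last x \<noteq> \<infinity>"
  proof (rule ObjI)
    show "altu True (x @ \<infinity> # y)" using R lx by auto
    show "hd (x @ \<infinity> # y) = 0" using zD(2) zd xn by simp
    show "last (x @ \<infinity> # y) = e" using zD(3) zd yn by simp
    show "count_list (x @ \<infinity> # y) 0 = (if e = 0 then 2 else 1)" using zD(5) zd m0 by simp
    show "distinct (RL (x @ \<infinity> # y))" using dis by auto
    show "set (RL (x @ \<infinity> # y)) = enat ` {1..v}" using setR by simp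
    show "cnt (x @ \<infinity> # y) = Suc h" using zD(8) zd m0 by simp
  qed (simp)
  show "hd y = \<infinity> \<and> 0 < h \<and> butlast x @ \<infinity> # tl y \<in> Obj e v (h - 1)" if lx: "last x = \<infinity>"
  proof -
    have hy: "hd y = \<infinity>" and alt': "altu True (butlast x @ \<infinity> # tl y)" using R lx by auto
    obtain x0 where x: "x = x0 @ [\<infinity>]" using xn lx by (metis append_butlast_last_id)
    obtain y1 where y: "y = \<infinity> # y1" using yn hy by (cases y) auto
    have x0n: "x0 \<noteq> []" using zD(2) zd x by (cases x0) auto
    have hpos: "0 < h" using zD(8) zd x y by simp
    have "x0 @ \<infinity> # y1 \<in> Obj e v (h - 1)"
    proof (rule ObjI)
      show "altu True (x0 @ \<infinity> # y1)" using alt' x y by simp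
      show "hd (x0 @ \<infinity> # y1) = 0" using zD(2) zd x x0n by simp
      show "last (x0 @ \<infinity> # y1) = e" using zD(3) zd x y by (cases y1) auto
      show "count_list (x0 @ \<infinity> # y1) 0 = (if e = 0 then 2 else 1)" using zD(5) zd m0 x y by simp
      show "distinct (RL (x0 @ \<infinity> # y1))" using dis x y by auto
      show "set (RL (x0 @ \<infinity> # y1)) = enat ` {1..v}" using setR x y by simp
      show "cnt (x0 @ \<infinity> # y1) = h - 1" using zD(8) zd m0 x y by simp
    qed (simp)
    then show ?thesis using hy hpos x y by simp
  qed
qed

lemma st_fill:
  assumes z': "x @ \<infinity> # y \<in> Obj e v (Suc h)" and yn: "y \<noteq> []" and e: "e = 0 \<or> e = \<infinity>"
  shows "st e (x @ enat (Suc v) # y) = st e (x @ \<infinity> # y) + cnt x + 2 * (if e = 0 then cnt y else cnt y - 1)"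
proof -
  let ?m = "enat (Suc v)"
  have m: "?m \<noteq> \<infinity>" by simp
  have xn: "x \<noteq> []" using Obj_x_ne[OF z'] .
  note na = noadj_mid[OF Obj_noadj[OF z']]
  have vals: "\<forall>a \<in> set x \<union> set y. a = \<infinity> \<or> a < ?m" using obj_vals_lt[OF z'] by auto
  have c1: "cadj IR x = cnt x" using cadj_IR[OF na(1)] na(3)[OF xn] xn by simp
  have c2: "cadj RI y = cnt y" using cadj_RI[OF na(2)] na(4)[OF yn] yn by simp
  have ly: "last y = e" using ObjD(3)[OF z'] yn by simp
  have c3: "e = \<infinity> \<Longrightarrow> cadj IR y = cnt y - 1" using cadj_IR[OF na(2)] ly yn by simp
  show ?thesis
    using L1_312[OF m vals] L1_213[OF m vals] L1_231[OF m vals] c1 c2 c3 e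
    by (auto simp: st_def)
qed

lemma st_split:
  assumes z': "x @ \<infinity> # y \<in> Obj e v h" and e: "e = 0 \<or> e = \<infinity>"
  shows "st e (x @ \<infinity> # enat (Suc v) # \<infinity> # y) = st e (x @ \<infinity> # y) + cnt x + 2 * cnt y"
proof -
  let ?m = "enat (Suc v)"
  have m: "?m \<noteq> \<infinity>" by simp
  have xn: "x \<noteq> []" using Obj_x_ne[OF z'] .
  note na = noadj_mid[OF Obj_noadj[OF z']]
  have vals0: "\<forall>a \<in> set x \<union> set y. a = \<infinity> \<or> a < ?m" using obj_vals_lt[OF z'] by auto
  have vals: "\<forall>a \<in> set (x @ [\<infinity>]) \<union> set (\<infinity> # y). a = \<infinity> \<or> a < ?m" using vals0 by auto
  have w: "x @ \<infinity> # ?m # \<infinity> # y = (x @ [\<infinity>]) @ ?m # (\<infinity> # y)" by simp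
  have w2: "(x @ [\<infinity>]) @ \<infinity> # \<infinity> # y = x @ \<infinity> # \<infinity> # (\<infinity> # y)" by simp
  have naX: "noadj (x @ [\<infinity>])" using na(1) na(3)[OF xn] xn by (simp add: noadj_append)
  have naY: "noadj (\<infinity> # y)" using na(2) na(4) by (auto simp: noadj_Cons)
  have c1: "cadj IR (x @ [\<infinity>]) = cnt x" using cadj_IR[OF naX] by simp
  have c2: "cadj RI (\<infinity> # y) = cnt y" using cadj_RI[OF naY] by simp
  have ly: "last (\<infinity> # y) = e" using ObjD(3)[OF z'] by (cases y) auto
  have c3: "e = \<infinity> \<Longrightarrow> cadj IR (\<infinity> # y) = cnt y" using cadj_IR[OF naY] ly by simp
  have col1: "PG Q1 R312 (x @ \<infinity> # \<infinity> # \<infinity> # y) = PG Q1 R312 (x @ \<infinity> # y)"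
    using collapse_312[of Q1 x "\<infinity> # y"] collapse_312[of Q1 x y] by simp
  have col2: "PG Q2 R312 (x @ \<infinity> # \<infinity> # \<infinity> # y) = PG Q2 R312 (x @ \<infinity> # y)"
    using collapse_312[of Q2 x "\<infinity> # y"] collapse_312[of Q2 x y] by simp
  have col3: "PG Q2 R213 (x @ \<infinity> # \<infinity> # \<infinity> # y) = PG Q2 R213 (x @ \<infinity> # y)"
    using collapse_213[of x "\<infinity> # y"] collapse_213[of x y] by simp
  show ?thesis
    unfolding w
    using L1_312[OF m vals] L1_213[OF m vals] L1_231[OF m vals] c1 c2 c3 e col1 col2 col3
    unfolding w2 by (auto simp: st_def)
qed


lemma length_filter_two: "length (filter (\<lambda>a. a = p \<or> a = r) l) \<le> count_list l p + count_list l r"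
  by (induction l) auto

lemma Obj_finite: "finite (Obj e v h)"
proof (rule finite_subset)
  show "Obj e v h \<subseteq> {z. set z \<subseteq> insert \<infinity> (enat ` {0..v}) \<and> length z \<le> v + (h + 2)}"
  proof
    fix z assume z: "z \<in> Obj e v h"
    have "set z \<subseteq> insert \<infinity> (enat ` {0..v})"
    proof
      fix a assume "a \<in> set z"
      from obj_vals[OF z this] show "a \<in> insert \<infinity> (enat ` {0..v})" by (auto simp: zero_enat_def)
    qed
    moreover have "length z \<le> v + (h + 2)"
    proof -
      have ce: "card (enat ` {1..v}) = v" by (subst card_image) (auto simp: inj_on_def)
      have l1: "length (RL z) = v"
        using distinct_card[OF ObjD(6)[OF z]] ObjD(7)[OF z] ce by metis
      have "length (filter (\<lambda>a. \<not> (a \<noteq> \<infinity> \<and> a \<noteq> 0)) z) = length (filter (\<lambda>a. a = \<infinity> \<or> a = 0) z)"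
        by (metis (mono_tags, lifting))
      also have "\<dots> \<le> cnt z + count_list z 0" by (rule length_filter_two)
      also have "\<dots> \<le> h + 2" using ObjD(8)[OF z] ObjD(5)[OF z] by auto
      finally have l2: "length (filter (\<lambda>a. \<not> (a \<noteq> \<infinity> \<and> a \<noteq> 0)) z) \<le> h + 2" .
      have "length z = length (RL z) + length (filter (\<lambda>a. \<not> (a \<noteq> \<infinity> \<and> a \<noteq> 0)) z)"
        by (rule sum_length_filter_compl[symmetric])
      then show ?thesis using l1 l2 by simp
    qed
    ultimately show "z \<in> {z. set z \<subseteq> insert \<infinity> (enat ` {0..v}) \<and> length z \<le> v + (h + 2)}" by simp
  qed
  show "finite {z. set z \<subseteq> insert \<infinity> (enat ` {0..v}) \<and> length z \<le> v + (h + 2)}"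
    by (rule finite_lists_length_le) simp
qed

definition W :: "'a::field \<Rightarrow> nat \<Rightarrow> 'a" where
  "W q N = (\<Sum>g<N. q ^ (g + 2 * (N - 1 - g)))"

definition S :: "'a::field \<Rightarrow> enat \<Rightarrow> nat \<Rightarrow> nat \<Rightarrow> 'a" where
  "S q e v h = (\<Sum>z \<in> Obj e v h. q ^ st e z)"

lemma W_closed: "W q N = q ^ (N - 1) * qint N q"
proof -
  have "W q N = (\<Sum>g<N. q ^ (N - 1) * q ^ (N - Suc g))"
  proof -
    have "g + 2 * (N - 1 - g) = (N - 1) + (N - Suc g)" if "g < N" for g using that by arith
    then show ?thesis unfolding W_def by (intro sum.cong refl) (simp add: power_add[symmetric])
  qed
  also have "\<dots> = q ^ (N - 1) * (\<Sum>g<N. q ^ (N - Suc g))" by (simp add: sum_distrib_left)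
  also have "(\<Sum>g<N. q ^ (N - Suc g)) = qint N q" unfolding qint_def by (rule sum.nat_diff_reindex)
  finally show ?thesis .
qed

lemma W_0[simp]: "W q 0 = 0" by (simp add: W_def)
lemma W_1[simp]: "W q 1 = 1" by (simp add: W_def)

definition D :: "enat list \<Rightarrow> (enat list \<times> enat list) set" where
  "D z = {(x, y). z = x @ \<infinity> # y}"
definition D1 :: "enat list \<Rightarrow> (enat list \<times> enat list) set" where
  "D1 z = {(x, y). z = x @ \<infinity> # y \<and> y \<noteq> []}"

lemma D_finite: "finite (D z)" unfolding D_def by (rule decomp_finite)
lemma D1_finite: "finite (D1 z)" by (rule finite_subset[OF _ D_finite[of z]]) (auto simp: D_def D1_def)

lemma inner_split: "(\<Sum>(x, y) \<in> D z. (q::'a::field) ^ (cnt x + 2 * cnt y)) = W q (cnt z)"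
  unfolding D_def W_def using decomp_sum[where f = "\<lambda>g k. q ^ (g + 2 * k)" and l = z and a = "\<infinity>::enat"] by simp

lemma inner_fill:
  assumes z: "z \<in> Obj e v N" and e: "e = 0 \<or> e = \<infinity>"
  shows "(\<Sum>(x, y) \<in> D1 z. (q::'a::field) ^ (cnt x + 2 * (if e = 0 then cnt y else cnt y - 1)))
     = (if e = 0 then W q N else W q (N - 1))"
proof (cases "e = 0")
  case True
  have "D1 z = D z"
  proof -
    have "y \<noteq> []" if "z = x @ \<infinity> # y" for x y
      using ObjD(3)[OF z] True that by (auto simp: zero_enat_def)
    then show ?thesis unfolding D_def D1_def by auto
  qed
  then show ?thesis using True inner_split[of q z] ObjD(8)[OF z] by simp
next
  case False
  with e have ei: "e = \<infinity>" by simp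
  obtain z0 where z0: "z = z0 @ [\<infinity>]"
    using ObjD(1,3)[OF z] ei by (metis append_butlast_last_id)
  have "D1 z = (\<lambda>(x, y). (x, y @ [\<infinity>])) ` D z0"
    unfolding D1_def D_def z0 by (rule decomp1_eq)
  moreover have "inj_on (\<lambda>(x, y). (x, y @ [\<infinity>])) (D z0)" by (auto simp: inj_on_def)
  ultimately have "(\<Sum>(x, y) \<in> D1 z. q ^ (cnt x + 2 * (cnt y - 1)))
      = (\<Sum>(x, y) \<in> D z0. q ^ (cnt x + 2 * (cnt (y @ [\<infinity>]) - 1)))"
    by (simp add: sum.reindex case_prod_unfold)
  also have "\<dots> = (\<Sum>(x, y) \<in> D z0. q ^ (cnt x + 2 * cnt y))"
    by (intro sum.cong refl) auto
  also have "\<dots> = W q (cnt z0)" by (rule inner_split)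
  also have "cnt z0 = N - 1" using ObjD(8)[OF z] z0 by simp
  finally show ?thesis using ei by simp
qed


lemma S_rec:
  fixes q :: "'a::field"
  assumes e: "e = 0 \<or> e = \<infinity>"
  shows "S q e (Suc v) h = (if e = 0 then W q (Suc h) else W q h) * S q e v (Suc h)
          + (if h = 0 then 0 else W q (h - 1) * S q e v (h - 1))"
proof -
  let ?m = "enat (Suc v)"
  let ?f = "\<lambda>z. q ^ st e z"
  define Pk where "Pk = {z \<in> Obj e (Suc v) h. \<exists>x y. z = x @ ?m # y \<and> last x \<noteq> \<infinity>}"
  define Vl where "Vl = Obj e (Suc v) h - Pk"
  have mO: "?m \<notin> set x" if "x @ \<infinity> # y \<in> Obj e v k" for x y k
    using obj_vals_lt[OF that, of ?m] by auto
  have mO2: "?m \<notin> set y" if "x @ \<infinity> # y \<in> Obj e v k" for x y k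
    using obj_vals_lt[OF that, of ?m] by auto
  have bij1: "bij_betw (\<lambda>(z', p). case p of (x, y) \<Rightarrow> x @ ?m # y) (Sigma (Obj e v (Suc h)) D1) Pk"
  proof (rule bij_betw_imageI)
    show "inj_on (\<lambda>(z', p). case p of (x, y) \<Rightarrow> x @ ?m # y) (Sigma (Obj e v (Suc h)) D1)"
    proof (rule inj_onI)
      fix a b assume a: "a \<in> Sigma (Obj e v (Suc h)) D1" and b: "b \<in> Sigma (Obj e v (Suc h)) D1"
        and eq: "(\<lambda>(z', p). case p of (x, y) \<Rightarrow> x @ ?m # y) a = (\<lambda>(z', p). case p of (x, y) \<Rightarrow> x @ ?m # y) b"
      obtain z1 x1 y1 where a': "a = (z1, (x1, y1))" "z1 = x1 @ \<infinity> # y1" "z1 \<in> Obj e v (Suc h)"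
        using a by (auto simp: D1_def)
      obtain z2 x2 y2 where b': "b = (z2, (x2, y2))" "z2 = x2 @ \<infinity> # y2" "z2 \<in> Obj e v (Suc h)"
        using b by (auto simp: D1_def)
      have "x1 @ ?m # y1 = x2 @ ?m # y2" using eq a' b' by simp
      moreover have "?m \<notin> set x1" "?m \<notin> set y1" using mO[of x1 y1] mO2[of x1 y1] a' by auto
      ultimately have "x1 = x2 \<and> y1 = y2" using append_Cons_eq_iff[of ?m x1 y1 x2 y2] by auto
      then show "a = b" using a' b' by simp
    qed
  next
    show "(\<lambda>(z', p). case p of (x, y) \<Rightarrow> x @ ?m # y) ` Sigma (Obj e v (Suc h)) D1 = Pk"
    proof (intro equalityI subsetI)
      fix z assume "z \<in> (\<lambda>(z', p). case p of (x, y) \<Rightarrow> x @ ?m # y) ` Sigma (Obj e v (Suc h)) D1"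
      then obtain x y where xy: "x @ \<infinity> # y \<in> Obj e v (Suc h)" "y \<noteq> []" "z = x @ ?m # y"
        by (auto simp: D1_def)
      have "last x \<noteq> \<infinity>" using noadj_mid(3)[OF Obj_noadj[OF xy(1)] Obj_x_ne[OF xy(1)]] .
      then show "z \<in> Pk" using fill_obj[OF xy(1,2)] xy(3) by (auto simp: Pk_def)
    next
      fix z assume "z \<in> Pk"
      then obtain x y where z: "z \<in> Obj e (Suc v) h" "z = x @ ?m # y" "last x \<noteq> \<infinity>" by (auto simp: Pk_def)
      note R = remove_obj[OF z(1) e z(2)]
      have "(x @ \<infinity> # y, (x, y)) \<in> Sigma (Obj e v (Suc h)) D1" using R(2) R(5)[OF z(3)] by (auto simp: D1_def)
      then show "z \<in> (\<lambda>(z', p). case p of (x, y) \<Rightarrow> x @ ?m # y) ` Sigma (Obj e v (Suc h)) D1"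
        using z(2) by force
    qed
  qed
  have sumPk: "sum ?f Pk = (if e = 0 then W q (Suc h) else W q h) * S q e v (Suc h)"
  proof -
    have "sum ?f Pk = (\<Sum>p \<in> Sigma (Obj e v (Suc h)) D1. ?f ((\<lambda>(z', p). case p of (x, y) \<Rightarrow> x @ ?m # y) p))"
      by (rule sum.reindex_bij_betw[OF bij1, symmetric])
    also have "\<dots> = (\<Sum>z' \<in> Obj e v (Suc h). \<Sum>p \<in> D1 z'. ?f (case p of (x, y) \<Rightarrow> x @ ?m # y))"
      by (subst sum.Sigma) (auto simp: Obj_finite D1_finite case_prod_unfold)
    also have "\<dots> = (\<Sum>z' \<in> Obj e v (Suc h). ?f z' * (if e = 0 then W q (Suc h) else W q h))"
    proof (rule sum.cong[OF refl])
      fix z' assume z': "z' \<in> Obj e v (Suc h)"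
      have "(\<Sum>p \<in> D1 z'. ?f (case p of (x, y) \<Rightarrow> x @ ?m # y))
          = (\<Sum>(x, y) \<in> D1 z'. ?f z' * q ^ (cnt x + 2 * (if e = 0 then cnt y else cnt y - 1)))"
      proof (rule sum.cong[OF refl])
        fix p assume p: "p \<in> D1 z'"
        then obtain x y where xy: "p = (x, y)" "z' = x @ \<infinity> # y" "y \<noteq> []" by (auto simp: D1_def)
        show "?f (case p of (x, y) \<Rightarrow> x @ ?m # y) = (case p of (x, y) \<Rightarrow> ?f z' * q ^ (cnt x + 2 * (if e = 0 then cnt y else cnt y - 1)))"
          using st_fill[of x y e v h, OF _ xy(3) e] z' xy by (simp add: power_add)
      qed
      also have "\<dots> = ?f z' * (\<Sum>(x, y) \<in> D1 z'. q ^ (cnt x + 2 * (if e = 0 then cnt y else cnt y - 1)))"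
        by (simp add: sum_distrib_left case_prod_unfold)
      also have "\<dots> = ?f z' * (if e = 0 then W q (Suc h) else W q h)"
        using inner_fill[OF z' e, of q] by simp
      finally show "(\<Sum>p \<in> D1 z'. ?f (case p of (x, y) \<Rightarrow> x @ ?m # y)) = ?f z' * (if e = 0 then W q (Suc h) else W q h)" .
    qed
    also have "\<dots> = (if e = 0 then W q (Suc h) else W q h) * S q e v (Suc h)"
      by (simp add: S_def sum_distrib_left mult.commute)
    finally show ?thesis .
  qed
  have sumVl: "sum ?f Vl = (if h = 0 then 0 else W q (h - 1) * S q e v (h - 1))"
  proof (cases h)
    case 0
    have "Vl = {}"
    proof -
      have "z \<in> Pk" if z: "z \<in> Obj e (Suc v) h" for z
      proof -
        have "?m \<in> set (RL z)" using ObjD(7)[OF z] by auto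
        then have "?m \<in> set z" by auto
        then obtain x y where zd: "z = x @ ?m # y" by (meson split_list)
        have "last x \<noteq> \<infinity>" using remove_obj(6)[OF z e zd] 0 by auto
        then show ?thesis using z zd by (auto simp: Pk_def)
      qed
      then show ?thesis by (auto simp: Vl_def)
    qed
    then show ?thesis using 0 by simp
  next
    case (Suc h')
    have bij2: "bij_betw (\<lambda>(z', p). case p of (x, y) \<Rightarrow> x @ \<infinity> # ?m # \<infinity> # y) (Sigma (Obj e v h') D) Vl"
    proof (rule bij_betw_imageI)
      show "inj_on (\<lambda>(z', p). case p of (x, y) \<Rightarrow> x @ \<infinity> # ?m # \<infinity> # y) (Sigma (Obj e v h') D)"
      proof (rule inj_onI)
        fix a b assume a: "a \<in> Sigma (Obj e v h') D" and b: "b \<in> Sigma (Obj e v h') D"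
          and eq: "(\<lambda>(z', p). case p of (x, y) \<Rightarrow> x @ \<infinity> # ?m # \<infinity> # y) a = (\<lambda>(z', p). case p of (x, y) \<Rightarrow> x @ \<infinity> # ?m # \<infinity> # y) b"
        obtain z1 x1 y1 where a': "a = (z1, (x1, y1))" "z1 = x1 @ \<infinity> # y1" "z1 \<in> Obj e v h'"
          using a by (auto simp: D_def)
        obtain z2 x2 y2 where b': "b = (z2, (x2, y2))" "z2 = x2 @ \<infinity> # y2" "z2 \<in> Obj e v h'"
          using b by (auto simp: D_def)
        have "(x1 @ [\<infinity>]) @ ?m # (\<infinity> # y1) = (x2 @ [\<infinity>]) @ ?m # (\<infinity> # y2)" using eq a' b' by simp
        moreover have "?m \<notin> set (x1 @ [\<infinity>])" "?m \<notin> set (\<infinity> # y1)" using mO[of x1 y1] mO2[of x1 y1] a' by auto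
        ultimately have "x1 @ [\<infinity>] = x2 @ [\<infinity>] \<and> \<infinity> # y1 = \<infinity> # y2"
          using append_Cons_eq_iff[of ?m "x1 @ [\<infinity>]" "\<infinity> # y1" "x2 @ [\<infinity>]" "\<infinity> # y2"] by blast
        then have "x1 = x2 \<and> y1 = y2" by simp
        then show "a = b" using a' b' by simp
      qed
    next
      show "(\<lambda>(z', p). case p of (x, y) \<Rightarrow> x @ \<infinity> # ?m # \<infinity> # y) ` Sigma (Obj e v h') D = Vl"
      proof (intro equalityI subsetI)
        fix z assume "z \<in> (\<lambda>(z', p). case p of (x, y) \<Rightarrow> x @ \<infinity> # ?m # \<infinity> # y) ` Sigma (Obj e v h') D"
        then obtain x y where xy: "x @ \<infinity> # y \<in> Obj e v h'" "z = x @ \<infinity> # ?m # \<infinity> # y"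
          by (auto simp: D_def)
        have zO: "z \<in> Obj e (Suc v) h" using split_obj[OF xy(1)] xy(2) Suc by simp
        have "z \<notin> Pk"
        proof
          assume "z \<in> Pk"
          then obtain x' y' where z': "z = x' @ ?m # y'" "last x' \<noteq> \<infinity>" by (auto simp: Pk_def)
          have "?m \<notin> set x'" "?m \<notin> set y'" using remove_obj(3,4)[OF zO e z'(1)] by auto
          moreover have "x' @ ?m # y' = (x @ [\<infinity>]) @ ?m # (\<infinity> # y)" using z' xy by simp
          ultimately have "x' = x @ [\<infinity>]" using append_Cons_eq_iff[of ?m x' y' "x @ [\<infinity>]" "\<infinity> # y"] by blast
          then show False using z'(2) by simp
        qed
        then show "z \<in> Vl" using zO by (simp add: Vl_def)
      next
        fix z assume "z \<in> Vl"
        then have zO: "z \<in> Obj e (Suc v) h" and nP: "z \<notin> Pk" by (auto simp: Vl_def)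
        have "?m \<in> set (RL z)" using ObjD(7)[OF zO] by auto
        then have "?m \<in> set z" by auto
        then obtain x y where zd: "z = x @ ?m # y" by (meson split_list)
        have lx: "last x = \<infinity>" using nP zO zd by (auto simp: Pk_def)
        note R = remove_obj[OF zO e zd]
        have R6: "hd y = \<infinity>" "butlast x @ \<infinity> # tl y \<in> Obj e v (h - 1)" using R(6)[OF lx] by auto
        have xe: "x = butlast x @ [\<infinity>]" using R(1) lx by (metis append_butlast_last_id)
        have ye: "y = \<infinity> # tl y" using R(2) R6(1) by (cases y) auto
        have "z = butlast x @ \<infinity> # ?m # \<infinity> # tl y" using zd xe ye by (metis append.assoc append_Cons append_Nil)
        moreover have "(butlast x @ \<infinity> # tl y, (butlast x, tl y)) \<in> Sigma (Obj e v h') D"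
          using R6(2) Suc by (auto simp: D_def)
        ultimately show "z \<in> (\<lambda>(z', p). case p of (x, y) \<Rightarrow> x @ \<infinity> # ?m # \<infinity> # y) ` Sigma (Obj e v h') D"
          by force
      qed
    qed
    have "sum ?f Vl = (\<Sum>p \<in> Sigma (Obj e v h') D. ?f ((\<lambda>(z', p). case p of (x, y) \<Rightarrow> x @ \<infinity> # ?m # \<infinity> # y) p))"
      by (rule sum.reindex_bij_betw[OF bij2, symmetric])
    also have "\<dots> = (\<Sum>z' \<in> Obj e v h'. \<Sum>p \<in> D z'. ?f (case p of (x, y) \<Rightarrow> x @ \<infinity> # ?m # \<infinity> # y))"
      by (subst sum.Sigma) (auto simp: Obj_finite D_finite case_prod_unfold)
    also have "\<dots> = (\<Sum>z' \<in> Obj e v h'. ?f z' * W q h')"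
    proof (rule sum.cong[OF refl])
      fix z' assume z': "z' \<in> Obj e v h'"
      have "(\<Sum>p \<in> D z'. ?f (case p of (x, y) \<Rightarrow> x @ \<infinity> # ?m # \<infinity> # y))
          = (\<Sum>(x, y) \<in> D z'. ?f z' * q ^ (cnt x + 2 * cnt y))"
      proof (rule sum.cong[OF refl])
        fix p assume p: "p \<in> D z'"
        then obtain x y where xy: "p = (x, y)" "z' = x @ \<infinity> # y" by (auto simp: D_def)
        show "?f (case p of (x, y) \<Rightarrow> x @ \<infinity> # ?m # \<infinity> # y) = (case p of (x, y) \<Rightarrow> ?f z' * q ^ (cnt x + 2 * cnt y))"
          using st_split[of x y e v h', OF _ e] z' xy by (simp add: power_add)
      qed
      also have "\<dots> = ?f z' * (\<Sum>(x, y) \<in> D z'. q ^ (cnt x + 2 * cnt y))"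
        by (simp add: sum_distrib_left case_prod_unfold)
      also have "\<dots> = ?f z' * W q h'"
        using inner_split[of q z'] ObjD(8)[OF z'] by simp
      finally show "(\<Sum>p \<in> D z'. ?f (case p of (x, y) \<Rightarrow> x @ \<infinity> # ?m # \<infinity> # y)) = ?f z' * W q h'" .
    qed
    also have "\<dots> = W q h' * S q e v h'" by (simp add: S_def sum_distrib_left mult.commute)
    finally show ?thesis using Suc by simp
  qed
  have "S q e (Suc v) h = sum ?f Pk + sum ?f Vl"
  proof -
    have "Pk \<subseteq> Obj e (Suc v) h" by (auto simp: Pk_def)
    then have "sum ?f (Obj e (Suc v) h) = sum ?f (Obj e (Suc v) h - Pk) + sum ?f Pk"
      by (rule sum.subset_diff) (rule Obj_finite)
    then show ?thesis by (simp add: S_def Vl_def)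
  qed
  then show ?thesis using sumPk sumVl by simp
qed


lemma Obj_0_sub:
  assumes z: "z \<in> Obj e 0 h" and e: "e = 0 \<or> e = \<infinity>"
  shows "z = (if e = 0 then [0, \<infinity>, 0] else [0, \<infinity>]) \<and> h = 1"
proof -
  note zD = ObjD[OF z]
  have els: "\<forall>a \<in> set z. a = 0 \<or> a = \<infinity>" using obj_vals[OF z] by auto
  obtain r where r: "z = 0 # r" using zD(1,2) by (cases z) auto
  show ?thesis
  proof (cases r)
    case Nil then show ?thesis using zD(3,5) r e by auto
  next
    case (Cons a r1)
    have a: "a = \<infinity>" using zD(4) r Cons els by (auto simp: zero_enat_def)
    show ?thesis
    proof (cases r1)
      case Nil then show ?thesis using zD(3,8) r Cons a by auto
    next
      case (Cons b r2)
      have b: "b = 0" using zD(4) r \<open>r = a # r1\<close> Cons a els by auto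
      have e0: "e = 0" and c2: "count_list r2 0 = 0"
        using zD(5) r \<open>r = a # r1\<close> Cons a b e by (auto split: if_splits)
      show ?thesis
      proof (cases r2)
        case Nil then show ?thesis using zD(8) r \<open>r = a # r1\<close> \<open>r1 = b # r2\<close> a b e0 by auto
      next
        case (Cons c r3)
        have c: "c = \<infinity>" using zD(4) r \<open>r = a # r1\<close> \<open>r1 = b # r2\<close> Cons a b els c2
          by (auto simp: zero_enat_def)
        show ?thesis
        proof (cases r3)
          case Nil then show ?thesis using zD(3) r \<open>r = a # r1\<close> \<open>r1 = b # r2\<close> \<open>r2 = c # r3\<close> c e0 by auto
        next
          case (Cons d r4)
          have "d = 0" using zD(4) r \<open>r = a # r1\<close> \<open>r1 = b # r2\<close> \<open>r2 = c # r3\<close> Cons c a b els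
            by (auto simp: lt_inf_iff)
          then have "0 \<in> set r2" using \<open>r2 = c # r3\<close> Cons by simp
          then show ?thesis using c2 count_list_0_iff[of r2 0] by simp
        qed
      qed
    qed
  qed
qed

lemma Obj_0:
  assumes e: "e = 0 \<or> e = \<infinity>"
  shows "Obj e 0 h = (if h = 1 then {if e = 0 then [0, \<infinity>, 0] else [0, \<infinity>]} else {})"
proof -
  let ?z = "if e = 0 then [0, \<infinity>, 0] else [0, \<infinity>::enat]"
  have "?z \<in> Obj e 0 1"
  proof (cases "e = 0")
    case True
    show ?thesis unfolding True by (rule ObjI) (simp_all add: zero_enat_def)
  next
    case False
    then have ei: "e = \<infinity>" using e by simp
    show ?thesis unfolding ei by (rule ObjI) (simp_all add: zero_enat_def)
  qed
  moreover have "Obj e 0 h \<subseteq> (if h = 1 then {?z} else {})"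
  proof
    fix z assume "z \<in> Obj e 0 h"
    from Obj_0_sub[OF this e] show "z \<in> (if h = 1 then {?z} else {})" by simp
  qed
  ultimately show ?thesis by (cases "h = 1") auto
qed

lemma PG_01:
  assumes "\<forall>a\<in>set z. a = 0 \<or> a = (\<infinity>::enat)"
  shows "PG Q R312 z = 0" "PG Q R213 z = 0"
proof -
  have v: "z ! k = 0 \<or> z ! k = \<infinity>" if "k < length z" for k using assms nth_mem[OF that] by blast
  have e1: "{(a, j). a + 1 < length z \<and> j < length z \<and> Q a j \<and> R312 (z ! a) (z ! (a + 1)) (z ! j)} = {}"
    using v by (fastforce simp: R312_def)
  show "PG Q R312 z = 0" unfolding PG_def e1 by simp
  have e2: "{(a, j). a + 1 < length z \<and> j < length z \<and> Q a j \<and> R213 (z ! a) (z ! (a + 1)) (z ! j)} = {}"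
    using v by (fastforce simp: R213_def)
  show "PG Q R213 z = 0" unfolding PG_def e2 by simp
qed

lemma S_0: "e = 0 \<or> e = \<infinity> \<Longrightarrow> S q e 0 h = (if h = 1 then 1 else 0)"
proof -
  assume e: "e = 0 \<or> e = \<infinity>"
  have st0: "st e (if e = 0 then [0, \<infinity>, 0] else [0, \<infinity>]) = 0"
    using PG_01[of "[0, \<infinity>, 0]"] PG_01[of "[0, \<infinity>]"] by (auto simp: st_def)
  show ?thesis unfolding S_def Obj_0[OF e] using st0 by simp
qed


lemma altu_nth: "altu u l = (\<forall>i. Suc i < length l \<longrightarrow> (if u = even i then l ! i < l ! Suc i else l ! Suc i < l ! i))"
proof (induction u l rule: altu.induct)
  case (1 u a b r)
  have "altu u (a # b # r) = ((if u then a < b else b < a) \<and> altu (\<not> u) (b # r))" by simp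
  also have "\<dots> = ((if u then a < b else b < a) \<and>
      (\<forall>i. Suc i < length (b # r) \<longrightarrow> (if (\<not> u) = even i then (b # r) ! i < (b # r) ! Suc i else (b # r) ! Suc i < (b # r) ! i)))"
    using 1 by simp
  also have "\<dots> = (\<forall>i. Suc i < length (a # b # r) \<longrightarrow> (if u = even i then (a # b # r) ! i < (a # b # r) ! Suc i else (a # b # r) ! Suc i < (a # b # r) ! i))"
  proof
    assume H: "(if u then a < b else b < a) \<and>
      (\<forall>i. Suc i < length (b # r) \<longrightarrow> (if (\<not> u) = even i then (b # r) ! i < (b # r) ! Suc i else (b # r) ! Suc i < (b # r) ! i))"
    show "\<forall>i. Suc i < length (a # b # r) \<longrightarrow> (if u = even i then (a # b # r) ! i < (a # b # r) ! Suc i else (a # b # r) ! Suc i < (a # b # r) ! i)"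
    proof (intro allI impI)
      fix i assume i: "Suc i < length (a # b # r)"
      show "if u = even i then (a # b # r) ! i < (a # b # r) ! Suc i else (a # b # r) ! Suc i < (a # b # r) ! i"
      proof (cases i)
        case 0 then show ?thesis using H by simp
      next
        case (Suc k)
        then have "Suc k < length (b # r)" using i by simp
        then show ?thesis using H Suc by auto
      qed
    qed
  next
    assume H: "\<forall>i. Suc i < length (a # b # r) \<longrightarrow> (if u = even i then (a # b # r) ! i < (a # b # r) ! Suc i else (a # b # r) ! Suc i < (a # b # r) ! i)"
    have "if u then a < b else b < a" using H[rule_format, of 0] by (cases u) simp_all
    moreover have "\<forall>i. Suc i < length (b # r) \<longrightarrow> (if (\<not> u) = even i then (b # r) ! i < (b # r) ! Suc i else (b # r) ! Suc i < (b # r) ! i)"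
    proof (intro allI impI)
      fix i assume "Suc i < length (b # r)"
      then show "if (\<not> u) = even i then (b # r) ! i < (b # r) ! Suc i else (b # r) ! Suc i < (b # r) ! i"
        using H[rule_format, of "Suc i"] by (simp split: if_splits)
    qed
    ultimately show "(if u then a < b else b < a) \<and>
      (\<forall>i. Suc i < length (b # r) \<longrightarrow> (if (\<not> u) = even i then (b # r) ! i < (b # r) ! Suc i else (b # r) ! Suc i < (b # r) ! i))"
      by blast
  qed
  finally show ?case .
next
  case ("2_1" u) then show ?case by simp
next
  case ("2_2" u v) then show ?case by simp
qed

lemma wrap_nth:
  "(0 # map enat s @ [e]) ! 0 = 0"
  "k < length s \<Longrightarrow> (0 # map enat s @ [e]) ! Suc k = enat (s ! k)"
  "(0 # map enat s @ [e]) ! Suc (length s) = e"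
  by (auto simp: nth_append)

lemma wrap_altu:
  assumes s: "set s = {1..m}" "distinct s" and e: "e = 0 \<and> odd m \<or> e = \<infinity> \<and> even m"
  shows "altu True (0 # map enat s @ [e]) = (\<forall>i. i + 1 < m \<longrightarrow> (if even i then s ! i > s ! (i + 1) else s ! i < s ! (i + 1)))"
proof -
  have len: "length s = m" using distinct_card[OF s(2)] s(1) by simp
  have pos: "s ! k \<ge> 1" if "k < m" for k using nth_mem[of k s] that len s(1) by auto
  let ?z = "0 # map enat s @ [e]"
  have lz: "length ?z = m + 2" using len by simp
  have A: "altu True ?z = (\<forall>i. Suc i < m + 2 \<longrightarrow> (if True = even i then ?z ! i < ?z ! Suc i else ?z ! Suc i < ?z ! i))"
    using altu_nth[of True ?z] lz by simp
  show ?thesis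
  proof
    assume H: "altu True ?z"
    show "\<forall>i. i + 1 < m \<longrightarrow> (if even i then s ! i > s ! (i + 1) else s ! i < s ! (i + 1))"
    proof (intro allI impI)
      fix i assume i: "i + 1 < m"
      have "if True = even (Suc i) then ?z ! Suc i < ?z ! Suc (Suc i) else ?z ! Suc (Suc i) < ?z ! Suc i"
        using H[unfolded A, rule_format, of "Suc i"] i by simp
      then show "if even i then s ! i > s ! (i + 1) else s ! i < s ! (i + 1)"
        using wrap_nth(2)[of i s e] wrap_nth(2)[of "Suc i" s e] i len by (auto split: if_splits)
    qed
  next
    assume H: "\<forall>i. i + 1 < m \<longrightarrow> (if even i then s ! i > s ! (i + 1) else s ! i < s ! (i + 1))"
    have "\<forall>i. Suc i < m + 2 \<longrightarrow> (if True = even i then ?z ! i < ?z ! Suc i else ?z ! Suc i < ?z ! i)"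
    proof (intro allI impI)
      fix i assume i: "Suc i < m + 2"
      show "if True = even i then ?z ! i < ?z ! Suc i else ?z ! Suc i < ?z ! i"
      proof (cases i)
        case 0
        show ?thesis
        proof (cases "m = 0")
          case True
          then have "e = \<infinity>" using e by auto
          then show ?thesis using 0 True len by (simp add: zero_enat_def)
        next
          case False
          then have "?z ! Suc 0 = enat (s ! 0)" using wrap_nth(2)[of 0 s e] len by simp
          then show ?thesis using 0 pos[of 0] False by (simp add: zero_enat_def)
        qed
      next
        case (Suc k)
        have k: "k < m" using i Suc by simp
        have zk: "?z ! Suc k = enat (s ! k)" using wrap_nth(2)[of k s e] k len by simp
        show ?thesis
        proof (cases "Suc k < m")
          case True
          have "?z ! Suc (Suc k) = enat (s ! Suc k)" using wrap_nth(2)[of "Suc k" s e] True len by simp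
          then show ?thesis using zk H[rule_format, of k] True Suc by (auto split: if_splits)
        next
          case False
          then have km: "Suc k = m" using k by simp
          have "?z ! Suc (Suc k) = e" using wrap_nth(3)[of s e] km len by simp
          then show ?thesis using zk e km Suc pos[OF k] by (auto simp: zero_enat_def)
        qed
      qed
    qed
    then show "altu True ?z" using A by simp
  qed
qed


lemma wrap_Obj:
  assumes e: "e = 0 \<and> odd m \<or> e = \<infinity> \<and> even m"
  shows "Obj e m (if e = 0 then 0 else 1) = (\<lambda>s. 0 # map enat s @ [e]) ` falling_alt m"
proof (intro equalityI subsetI)
  fix z assume z: "z \<in> Obj e m (if e = 0 then 0 else 1)"
  note zD = ObjD[OF z]
  obtain r where r: "z = 0 # r" using zD(1,2) by (cases z) auto
  have rn: "r \<noteq> []" using zD(3,5) r e by (auto simp: zero_enat_def)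
  obtain w where w: "r = w @ [e]" using rn zD(3) r by (metis append_butlast_last_id last_ConsR)
  have ne: "(0::enat) \<noteq> \<infinity>" by simp
  have w0: "count_list w 0 = 0" using zD(5) r w e by (auto split: if_splits)
  have wi: "cnt w = 0" using zD(8) r w e by (auto split: if_splits)
  have w0': "0 \<notin> set w" using w0 count_list_0_iff by metis
  have wi': "\<infinity> \<notin> set w" using wi count_list_0_iff by metis
  have RLw: "RL z = w" using r w w0' wi' e by (auto intro: filter_True)
  define s where "s = map the_enat w"
  have te: "enat (the_enat a) = a" if "a \<in> set w" for a
  proof -
    have "a \<noteq> \<infinity>" using that wi' by auto
    then show ?thesis by (cases a) auto
  qed
  have ws: "w = map enat s" unfolding s_def using te by (induction w) auto
  have ds: "distinct s" using zD(6) RLw ws by (simp add: distinct_map)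
  have ss: "set s = {1..m}"
  proof -
    have "enat ` set s = enat ` {1..m}" using zD(7) RLw ws by simp
    then show ?thesis by (simp add: inj_image_eq_iff inj_on_def)
  qed
  have "altu True (0 # map enat s @ [e])" using zD(4) r w ws by simp
  then have "\<forall>i. i + 1 < m \<longrightarrow> (if even i then s ! i > s ! (i + 1) else s ! i < s ! (i + 1))"
    using wrap_altu[OF ss ds e] by simp
  then have "s \<in> falling_alt m" using ds ss by (simp add: falling_alt_def)
  moreover have "z = 0 # map enat s @ [e]" using r w ws by simp
  ultimately show "z \<in> (\<lambda>s. 0 # map enat s @ [e]) ` falling_alt m" by blast
next
  fix z assume "z \<in> (\<lambda>s. 0 # map enat s @ [e]) ` falling_alt m"
  then obtain s where s: "s \<in> falling_alt m" and zs: "z = 0 # map enat s @ [e]" by auto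
  have ds: "distinct s" and ss: "set s = {1..m}"
    and alt: "\<forall>i. i + 1 < m \<longrightarrow> (if even i then s ! i > s ! (i + 1) else s ! i < s ! (i + 1))"
    using s by (auto simp: falling_alt_def)
  have n0: "0 \<notin> set (map enat s)" using ss by (auto simp: zero_enat_def)
  have ni: "\<infinity> \<notin> set (map enat s)" by auto
  have c0: "count_list (map enat s) 0 = 0" using n0 count_list_0_iff by metis
  have ci: "cnt (map enat s) = 0" using ni count_list_0_iff by metis
  have RLz: "RL z = map enat s" using zs n0 ni e by (auto intro: filter_True)
  show "z \<in> Obj e m (if e = 0 then 0 else 1)"
  proof (rule ObjI)
    show "altu True z" using wrap_altu[OF ss ds e] alt zs by simp
    show "count_list z 0 = (if e = 0 then 2 else 1)" using zs c0 e by auto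
    show "distinct (RL z)" using RLz ds by (simp add: distinct_map inj_on_def)
    show "set (RL z) = enat ` {1..m}" using RLz ss by simp
    show "cnt z = (if e = 0 then 0 else 1)" using zs ci e by auto
  qed (use zs in auto)
qed

lemma S_final:
  fixes q :: "'a::field"
  assumes e: "e = 0 \<and> odd m \<or> e = \<infinity> \<and> even m"
  shows "S q e m (if e = 0 then 0 else 1) = Estar m q"
proof -
  have inj: "inj_on (\<lambda>s. 0 # map enat s @ [e]) (falling_alt m)"
    by (auto simp: inj_on_def inj_map_eq_map)
  have "S q e m (if e = 0 then 0 else 1) = (\<Sum>s \<in> falling_alt m. q ^ st e (0 # map enat s @ [e]))"
    unfolding S_def wrap_Obj[OF e] by (simp add: sum.reindex[OF inj])
  also have "\<dots> = Estar m q"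
    using e by (auto simp: Estar_def st_def stat_odd stat_even)
  finally show ?thesis .
qed


lemma S_odd_Tr: "S q 0 v (Suc h) = Tr (\<lambda>i. W q (Suc i)) (\<lambda>i. W q (Suc i)) v h"
proof (induction v arbitrary: h)
  case 0 then show ?case by (simp add: S_0)
next
  case (Suc v)
  have "S q 0 (Suc v) (Suc h) = W q (Suc (Suc h)) * S q 0 v (Suc (Suc h)) + W q h * S q 0 v h"
    using S_rec[of 0 q v "Suc h"] by simp
  also have "\<dots> = Tr (\<lambda>i. W q (Suc i)) (\<lambda>i. W q (Suc i)) (Suc v) h"
  proof (cases h)
    case 0 then show ?thesis using Suc.IH by simp
  next
    case (Suc h') then show ?thesis using Suc.IH[of h'] Suc.IH[of "Suc h"] by (simp add: algebra_simps)
  qed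
  finally show ?case .
qed

lemma S_even_Tr: "S q \<infinity> v (Suc h) = Tr (\<lambda>i. W q (Suc i)) (\<lambda>i. W q i) v h"
proof (induction v arbitrary: h)
  case 0 then show ?case by (simp add: S_0)
next
  case (Suc v)
  have "S q \<infinity> (Suc v) (Suc h) = W q (Suc h) * S q \<infinity> v (Suc (Suc h)) + W q h * S q \<infinity> v h"
    using S_rec[of \<infinity> q v "Suc h"] by simp
  also have "\<dots> = Tr (\<lambda>i. W q (Suc i)) (\<lambda>i. W q i) (Suc v) h"
  proof (cases h)
    case 0 then show ?thesis using Suc.IH by simp
  next
    case (Suc h') then show ?thesis using Suc.IH[of h'] Suc.IH[of "Suc h"] by (simp add: algebra_simps)
  qed
  finally show ?case .
qed

lemma E_odd: "odd m \<Longrightarrow> Estar m q = Tr (\<lambda>i. W q (Suc i)) (\<lambda>i. W q (Suc i)) (m - 1) 0"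
proof -
  assume m: "odd m"
  then obtain n where n: "m = Suc n" by (cases m) auto
  have "Estar m q = S q 0 m 0" using S_final[of 0 m q] m by simp
  also have "\<dots> = S q 0 n 1" using S_rec[of 0 q n 0] n by (simp add: W_def)
  also have "\<dots> = Tr (\<lambda>i. W q (Suc i)) (\<lambda>i. W q (Suc i)) n 0" using S_odd_Tr[of q n 0] by simp
  finally show ?thesis using n by simp
qed

lemma E_even: "even m \<Longrightarrow> Estar m q = Tr (\<lambda>i. W q (Suc i)) (\<lambda>i. W q i) m 0"
proof -
  assume m: "even m"
  have "Estar m q = S q \<infinity> m 1" using S_final[of \<infinity> m q] m by simp
  also have "\<dots> = Tr (\<lambda>i. W q (Suc i)) (\<lambda>i. W q i) m 0" using S_even_Tr[of q m 0] by simp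
  finally show ?thesis .
qed

theorem corollary2p2:
  fixes q :: "'a::field"
  shows "((\<lambda>h. fps_X * cfrac (\<lambda>k. q ^ (2 * k - 1) * qint k q * qint (k + 1) q) 1 h)
            \<longlonglongrightarrow> Abs_fps (\<lambda>m. if odd m then Estar m q else 0)) \<and>
         ((\<lambda>h. cfrac (\<lambda>k. q ^ (2 * k - 2) * (qint k q) ^ 2) 1 h)
            \<longlonglongrightarrow> Abs_fps (\<lambda>m. if even m then Estar m q else 0))"
proof
  define u1 where "u1 = (\<lambda>i. W q (Suc i))"
  have c1: "q ^ (2 * k - 1) * qint k q * qint (k + 1) q = u1 (k - 1) * u1 k" if "k \<ge> 1" for k
  proof -
    have "u1 (k - 1) * u1 k = q ^ (k - 1) * qint k q * (q ^ k * qint (Suc k) q)"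
      using that by (simp add: u1_def W_closed)
    also have "\<dots> = q ^ (k - 1 + k) * qint k q * qint (k + 1) q" by (simp add: power_add algebra_simps)
    also have "k - 1 + k = 2 * k - 1" using that by simp
    finally show ?thesis by simp
  qed
  have L1: "(\<lambda>H. cfrac (\<lambda>k. q ^ (2 * k - 1) * qint k q * qint (k + 1) q) 1 H) \<longlonglongrightarrow> Abs_fps (\<lambda>n. Tr u1 u1 n 0)"
    by (rule cfrac_lim) (rule c1)
  show "(\<lambda>h. fps_X * cfrac (\<lambda>k. q ^ (2 * k - 1) * qint k q * qint (k + 1) q) 1 h)
            \<longlonglongrightarrow> Abs_fps (\<lambda>m. if odd m then Estar m q else 0)"
  proof (rule tendsto_fpsI)
    fix n
    show "eventually (\<lambda>h. fps_nth (fps_X * cfrac (\<lambda>k. q ^ (2 * k - 1) * qint k q * qint (k + 1) q) 1 h) n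
            = fps_nth (Abs_fps (\<lambda>m. if odd m then Estar m q else 0)) n) sequentially"
    proof (cases n)
      case 0 then show ?thesis by (simp add: fps_X_mult_nth)
    next
      case (Suc k)
      have ev: "eventually (\<lambda>h. fps_nth (cfrac (\<lambda>k. q ^ (2 * k - 1) * qint k q * qint (k + 1) q) 1 h) k = Tr u1 u1 k 0) sequentially"
        using L1[unfolded tendsto_fps_iff] by simp
      have tgt: "(if odd (Suc k) then Estar (Suc k) q else 0) = Tr u1 u1 k 0"
      proof (cases "odd (Suc k)")
        case True then show ?thesis using E_odd[OF True, of q] by (simp add: u1_def)
      next
        case False then have "odd (k + 0)" by simp
        from Tr_parity[OF this] False show ?thesis by simp
      qed
      show ?thesis using ev Suc tgt by (simp add: fps_X_mult_nth)
    qed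
  qed
next
  define u2 where "u2 = (\<lambda>i. W q (Suc i))"
  define d2 where "d2 = (\<lambda>i. W q i)"
  have c2: "q ^ (2 * k - 2) * (qint k q) ^ 2 = u2 (k - 1) * d2 k" if "k \<ge> 1" for k
  proof -
    have "u2 (k - 1) * d2 k = q ^ (k - 1) * qint k q * (q ^ (k - 1) * qint k q)"
      using that by (simp add: u2_def d2_def W_closed)
    also have "\<dots> = q ^ (k - 1 + (k - 1)) * (qint k q) ^ 2" by (simp add: power_add power2_eq_square algebra_simps)
    also have "k - 1 + (k - 1) = 2 * k - 2" using that by simp
    finally show ?thesis by simp
  qed
  have L2: "(\<lambda>H. cfrac (\<lambda>k. q ^ (2 * k - 2) * (qint k q) ^ 2) 1 H) \<longlonglongrightarrow> Abs_fps (\<lambda>n. Tr u2 d2 n 0)"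
    by (rule cfrac_lim) (rule c2)
  have "Abs_fps (\<lambda>n. Tr u2 d2 n 0) = Abs_fps (\<lambda>m. if even m then Estar m q else 0)"
  proof -
    have "Tr u2 d2 m 0 = (if even m then Estar m q else 0)" for m
    proof (cases "even m")
      case True then show ?thesis using E_even[OF True, of q] by (simp add: u2_def d2_def)
    next
      case False then have "odd (m + 0)" by simp
      from Tr_parity[OF this] False show ?thesis by simp
    qed
    then show ?thesis by simp
  qed
  with L2 show "(\<lambda>h. cfrac (\<lambda>k. q ^ (2 * k - 2) * (qint k q) ^ 2) 1 h)
            \<longlonglongrightarrow> Abs_fps (\<lambda>m. if even m then Estar m q else 0)" by simp
qed


end
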